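(* For any Boolean function family $f$ that can be computed by depth-$d$ $\mathsf{TC}^0$ circuits, $f$ can be implemented noncleanly by a circuit family in $\mathsf{A}^{\mathsf{CQ}}_{4d}$ and cleanly by a circuit family in $\mathsf{A}^{\mathsf{CQ}}_{8d}$.
   Context: $\mathsf{TC}^0$ circuits of depth $d$ are polynomial-size classical Boolean circuits with $d$ layers of threshold gates $\mathbf{1}\{\sum_i x_i\ge t\}$ of unbounded fan-in and unbounded fan-out. $\mathsf{QNC}^0$ denotes constant-depth circuits of arbitrary two-qubit gates. $\mathsf{A}^{\mathsf{CQ}}_k$ is the class of circuit families that are a product of $k+1$ circuits alternating between arbitrary-size Clifford circuits and $\mathsf{QNC}^0$ circuits of a fixed constant depth, starting (in order of application) with a Clifford circuit. A unitary $U$ cleanly computes $f$ if $U|x\rangle|b\rangle|0^a\rangle = |x\rangle|f(x)\oplus b\rangle|0^a\rangle$ for all inputs $x$ and bits $b$ (with $a$ polynomially many ancillas); it noncleanly computes $f$ if on input $|x\rangle|0\rangle|0^a\rangle$ it outputs a state of the form $|\psi_x\rangle|f(x)\rangle$ with the designated output qubit equal to $|f(x)\rangle$. *)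

theory Defs
  imports Complex_Main
begin

text \<open>Wires are numbered: wire w < m is input bit x!w, wire m+k is the output of
  gate number k.  A literal is a pair (w, neg): the value of wire w, negated iff neg.
  A gate is (literals, threshold t, layer l); it outputs 1 iff the number of true
  literals among its (distinct) inputs is at least t.\<close>

type_synonym tc_gate = "(nat \<times> bool) list \<times> int \<times> nat"
type_synonym tc_circuit = "tc_gate list \<times> nat"   \<comment> \<open>gates, designated output wire\<close>

definition lit_val :: "bool list \<Rightarrow> nat \<times> bool \<Rightarrow> bool" where
  "lit_val vs lt = (vs ! fst lt \<noteq> snd lt)"

definition gate_val :: "bool list \<Rightarrow> tc_gate \<Rightarrow> bool" where
  "gate_val vs g = (int (length (filter (lit_val vs) (fst g))) \<ge> fst (snd g))"

fun eval_gates :: "bool list \<Rightarrow> tc_gate list \<Rightarrow> bool list" where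
  "eval_gates vs [] = vs"
| "eval_gates vs (g # gs) = eval_gates (vs @ [gate_val vs g]) gs"

definition tc_eval :: "bool list \<Rightarrow> tc_circuit \<Rightarrow> bool" where
  "tc_eval x C = eval_gates x (fst C) ! snd C"

definition gate_layer :: "tc_gate \<Rightarrow> nat" where
  "gate_layer g = snd (snd g)"

definition tc_wf :: "nat \<Rightarrow> nat \<Rightarrow> tc_circuit \<Rightarrow> bool" where
  "tc_wf m d C \<longleftrightarrow>
     snd C < m + length (fst C) \<and>
     (\<forall>k < length (fst C).
        1 \<le> gate_layer (fst C ! k) \<and> gate_layer (fst C ! k) \<le> d \<and>
        distinct (map fst (fst (fst C ! k))) \<and>
        (\<forall>lt \<in> set (fst (fst C ! k)).
           fst lt < m + k \<and>
           (m \<le> fst lt \<longrightarrow> gate_layer (fst C ! (fst lt - m)) < gate_layer (fst C ! k))))"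

definition tc0_depth :: "nat \<Rightarrow> (bool list \<Rightarrow> bool) \<Rightarrow> bool" where
  "tc0_depth d f \<longleftrightarrow>
     (\<exists>c::nat. \<forall>m. \<exists>C. tc_wf m d C \<and> length (fst C) \<le> c * m ^ c + c \<and>
        (\<forall>x. length x = m \<longrightarrow> tc_eval x C = f x))"

text \<open>An operator on N qubits is given by its matrix entries U y x = \<langle>y|U|x\<rangle>,
  indexed by bit strings y, x of length N (qubit i is the i-th list entry).\<close>

type_synonym qop = "bool list \<Rightarrow> bool list \<Rightarrow> complex"
type_synonym qstate = "bool list \<Rightarrow> complex"

definition strs :: "nat \<Rightarrow> bool list set" where
  "strs N = {z. length z = N}"

definition op_id :: qop where
  "op_id y x = (if y = x then 1 else 0)"

definition op_mult :: "nat \<Rightarrow> qop \<Rightarrow> qop \<Rightarrow> qop" where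
  "op_mult N A B y x = (\<Sum>z\<in>strs N. A y z * B z x)"

definition ket :: "bool list \<Rightarrow> qstate" where
  "ket b y = (if y = b then 1 else 0)"

definition apply_op :: "nat \<Rightarrow> qop \<Rightarrow> qstate \<Rightarrow> qstate" where
  "apply_op N U \<psi> y = (if length y = N then (\<Sum>x\<in>strs N. U y x * \<psi> x) else 0)"

definition emb1 :: "nat \<Rightarrow> nat \<Rightarrow> (bool \<Rightarrow> bool \<Rightarrow> complex) \<Rightarrow> qop" where
  "emb1 N i G y x = (if \<forall>k<N. k \<noteq> i \<longrightarrow> y ! k = x ! k then G (y ! i) (x ! i) else 0)"

definition emb2 :: "nat \<Rightarrow> nat \<Rightarrow> nat \<Rightarrow> (bool \<times> bool \<Rightarrow> bool \<times> bool \<Rightarrow> complex) \<Rightarrow> qop" where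
  "emb2 N i j G y x =
     (if \<forall>k<N. k \<noteq> i \<and> k \<noteq> j \<longrightarrow> y ! k = x ! k then G (y ! i, y ! j) (x ! i, x ! j) else 0)"

text \<open>Operator of a sequence of operators, the first one applied first.\<close>
definition seq_op :: "nat \<Rightarrow> qop list \<Rightarrow> qop" where
  "seq_op N Us = foldl (\<lambda>U V. op_mult N V U) op_id Us"

definition unitary2 :: "(bool \<times> bool \<Rightarrow> bool \<times> bool \<Rightarrow> complex) \<Rightarrow> bool" where
  "unitary2 G \<longleftrightarrow> (\<forall>a b. (\<Sum>c\<in>UNIV. cnj (G c a) * G c b) = (if a = b then 1 else 0))"

datatype cliff_gate = Hg nat | Sg nat | CNOTg nat nat

definition H_mat :: "bool \<Rightarrow> bool \<Rightarrow> complex" where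
  "H_mat a b = (if a \<and> b then -1 else 1) / complex_of_real (sqrt 2)"

definition S_mat :: "bool \<Rightarrow> bool \<Rightarrow> complex" where
  "S_mat a b = (if a \<noteq> b then 0 else if a then \<i> else 1)"

definition CNOT_mat :: "bool \<times> bool \<Rightarrow> bool \<times> bool \<Rightarrow> complex" where
  "CNOT_mat y x = (if fst y = fst x \<and> snd y = (snd x \<noteq> fst x) then 1 else 0)"

fun cliff_gate_ok :: "nat \<Rightarrow> cliff_gate \<Rightarrow> bool" where
  "cliff_gate_ok N (Hg i) = (i < N)"
| "cliff_gate_ok N (Sg i) = (i < N)"
| "cliff_gate_ok N (CNOTg i j) = (i < N \<and> j < N \<and> i \<noteq> j)"

fun cliff_gate_op :: "nat \<Rightarrow> cliff_gate \<Rightarrow> qop" where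
  "cliff_gate_op N (Hg i) = emb1 N i H_mat"
| "cliff_gate_op N (Sg i) = emb1 N i S_mat"
| "cliff_gate_op N (CNOTg i j) = emb2 N i j CNOT_mat"

definition clifford_circuit :: "nat \<Rightarrow> qop \<Rightarrow> bool" where
  "clifford_circuit N U \<longleftrightarrow>
     (\<exists>gs. (\<forall>g\<in>set gs. cliff_gate_ok N g) \<and> U = seq_op N (map (cliff_gate_op N) gs))"

definition layer_ok :: "nat \<Rightarrow> (nat \<times> nat \<times> (bool \<times> bool \<Rightarrow> bool \<times> bool \<Rightarrow> complex)) list \<Rightarrow> bool" where
  "layer_ok N L \<longleftrightarrow>
     distinct (concat (map (\<lambda>(i, j, G). [i, j]) L)) \<and>
     (\<forall>(i, j, G)\<in>set L. i < N \<and> j < N \<and> unitary2 G)"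

definition layer_op :: "nat \<Rightarrow> (nat \<times> nat \<times> (bool \<times> bool \<Rightarrow> bool \<times> bool \<Rightarrow> complex)) list \<Rightarrow> qop" where
  "layer_op N L = seq_op N (map (\<lambda>(i, j, G). emb2 N i j G) L)"

definition qnc0_circuit :: "nat \<Rightarrow> nat \<Rightarrow> qop \<Rightarrow> bool" where
  "qnc0_circuit N D U \<longleftrightarrow>
     (\<exists>Ls. length Ls \<le> D \<and> (\<forall>L\<in>set Ls. layer_ok N L) \<and> U = seq_op N (map (layer_op N) Ls))"

definition acq_circuit :: "nat \<Rightarrow> nat \<Rightarrow> nat \<Rightarrow> qop \<Rightarrow> bool" where
  "acq_circuit N k D U \<longleftrightarrow>
     (\<exists>Us. length Us = k + 1 \<and>
        (\<forall>i\<le>k. (even i \<longrightarrow> clifford_circuit N (Us ! i)) \<and>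
                (odd i \<longrightarrow> qnc0_circuit N D (Us ! i))) \<and>
        U = seq_op N Us)"

text \<open>Qubit layout on N = m + 1 + a qubits: input x (qubits 0..m-1), output qubit m,
  ancillas m+1..m+a.\<close>

definition cleanly_computes :: "nat \<Rightarrow> nat \<Rightarrow> qop \<Rightarrow> (bool list \<Rightarrow> bool) \<Rightarrow> bool" where
  "cleanly_computes m a U f \<longleftrightarrow>
     (\<forall>x b. length x = m \<longrightarrow>
        apply_op (m + 1 + a) U (ket (x @ [b] @ replicate a False))
          = ket (x @ [f x \<noteq> b] @ replicate a False))"

definition noncleanly_computes :: "nat \<Rightarrow> nat \<Rightarrow> qop \<Rightarrow> (bool list \<Rightarrow> bool) \<Rightarrow> bool" where
  "noncleanly_computes m a U f \<longleftrightarrow>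
     (\<forall>x. length x = m \<longrightarrow>
        (\<exists>\<psi> :: qstate.
           apply_op (m + 1 + a) U (ket (x @ [False] @ replicate a False))
             = (\<lambda>y. if length y = m + 1 + a \<and> y ! m = f x
                    then \<psi> (take m y @ drop (m + 1) y) else 0)))"

definition cleanly_in_ACQ :: "nat \<Rightarrow> (bool list \<Rightarrow> bool) \<Rightarrow> bool" where
  "cleanly_in_ACQ k f \<longleftrightarrow>
     (\<exists>D c::nat. \<forall>m. \<exists>a U. a \<le> c * m ^ c + c \<and> acq_circuit (m + 1 + a) k D U \<and>
        cleanly_computes m a U f)"

definition noncleanly_in_ACQ :: "nat \<Rightarrow> (bool list \<Rightarrow> bool) \<Rightarrow> bool" where
  "noncleanly_in_ACQ k f \<longleftrightarrow>
     (\<exists>D c::nat. \<forall>m. \<exists>a U. a \<le> c * m ^ c + c \<and> acq_circuit (m + 1 + a) k D U \<and>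
        noncleanly_computes m a U f)"

end

theory Submission
  imports Defs "HOL-Library.Nat_Bijection"
begin


lemma finite_strs[simp]: "finite (strs N)"
proof -
  have "strs N = set (List.n_lists N [False, True])"
    by (auto simp: strs_def set_n_lists)
  then show ?thesis by simp
qed

lemma mem_strs[simp]: "x \<in> strs N \<longleftrightarrow> length x = N"
  by (simp add: strs_def)

definition restr :: "nat \<Rightarrow> qstate \<Rightarrow> qstate" where
  "restr N \<psi> y = (if length y = N then \<psi> y else 0)"

lemma apply_op_restr: "apply_op N U (restr N \<psi>) = apply_op N U \<psi>"
  by (rule ext) (auto simp: apply_op_def restr_def intro!: sum.cong)

lemma restr_apply_op[simp]: "restr N (apply_op N U \<psi>) = apply_op N U \<psi>"
  by (rule ext) (auto simp: apply_op_def restr_def)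

lemma apply_op_mult: "apply_op N (op_mult N A B) \<psi> = apply_op N A (apply_op N B \<psi>)"
proof (rule ext)
  fix y
  show "apply_op N (op_mult N A B) \<psi> y = apply_op N A (apply_op N B \<psi>) y"
  proof (cases "length y = N")
    case True
    have "apply_op N (op_mult N A B) \<psi> y = (\<Sum>x\<in>strs N. (\<Sum>z\<in>strs N. A y z * B z x) * \<psi> x)"
      using True by (simp add: apply_op_def op_mult_def)
    also have "\<dots> = (\<Sum>x\<in>strs N. \<Sum>z\<in>strs N. A y z * (B z x * \<psi> x))"
      by (simp add: sum_distrib_right mult.assoc)
    also have "\<dots> = (\<Sum>z\<in>strs N. \<Sum>x\<in>strs N. A y z * (B z x * \<psi> x))"
      by (rule sum.swap)
    also have "\<dots> = (\<Sum>z\<in>strs N. A y z * apply_op N B \<psi> z)"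
      by (auto simp: apply_op_def sum_distrib_left intro!: sum.cong)
    also have "\<dots> = apply_op N A (apply_op N B \<psi>) y"
      using True by (simp add: apply_op_def)
    finally show ?thesis .
  qed (simp add: apply_op_def)
qed

lemma apply_op_id: "apply_op N op_id \<psi> = restr N \<psi>"
proof (rule ext)
  fix y
  show "apply_op N op_id \<psi> y = restr N \<psi> y"
  proof (cases "length y = N")
    case True
    have "apply_op N op_id \<psi> y = (\<Sum>x\<in>strs N. (if y = x then 1 else 0) * \<psi> x)"
      using True by (simp add: apply_op_def op_id_def)
    also have "\<dots> = (\<Sum>x\<in>strs N. (if y = x then \<psi> x else 0))"
      by (rule sum.cong) auto
    also have "\<dots> = \<psi> y" using True by (simp add: sum.delta)
    finally show ?thesis using True by (simp add: restr_def)
  qed (simp add: apply_op_def restr_def)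
qed

definition run :: "nat \<Rightarrow> qop list \<Rightarrow> qstate \<Rightarrow> qstate" where
  "run N Us \<psi> = foldl (\<lambda>\<psi> U. apply_op N U \<psi>) \<psi> Us"

lemma run_Nil[simp]: "run N [] \<psi> = \<psi>" by (simp add: run_def)
lemma run_Cons[simp]: "run N (U # Us) \<psi> = run N Us (apply_op N U \<psi>)" by (simp add: run_def)
lemma run_append[simp]: "run N (Us @ Vs) \<psi> = run N Vs (run N Us \<psi>)" by (simp add: run_def)

lemma apply_foldl:
  "apply_op N (foldl (\<lambda>U V. op_mult N V U) U0 Us) \<psi> = run N Us (apply_op N U0 \<psi>)"
  by (induction Us arbitrary: U0) (simp_all add: apply_op_mult)

lemma apply_seq_op: "apply_op N (seq_op N Us) \<psi> = run N Us (restr N \<psi>)"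
  by (simp add: seq_op_def apply_foldl apply_op_id)


lemma upd_self: "k < length y \<Longrightarrow> y[k := y ! k] = y" by simp

lemma apply_emb2:
  assumes ij: "i < N" "j < N" "i \<noteq> j" and y: "length y = N"
  shows "apply_op N (emb2 N i j G) \<psi> y =
           (\<Sum>ab\<in>UNIV. G (y!i, y!j) ab * \<psi> (y[i := fst ab, j := snd ab]))"
proof -
  define h where "h ab = y[i := fst ab, j := snd ab]" for ab :: "bool \<times> bool"
  have inj: "inj h"
  proof (rule injI)
    fix a b assume "h a = h b"
    then have "h a ! i = h b ! i" "h a ! j = h b ! j" by auto
    then show "a = b" using ij y by (auto simp: h_def prod_eq_iff nth_list_update)
  qed
  have sub: "range h \<subseteq> strs N" using y by (auto simp: h_def)
  have zero: "\<forall>x\<in>strs N - range h. emb2 N i j G y x * \<psi> x = 0"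
  proof
    fix x assume x: "x \<in> strs N - range h"
    show "emb2 N i j G y x * \<psi> x = 0"
    proof (cases "\<forall>k<N. k \<noteq> i \<and> k \<noteq> j \<longrightarrow> y ! k = x ! k")
      case True
      have "x = h (x!i, x!j)"
      proof (rule nth_equalityI)
        show "length x = length (h (x!i,x!j))" using x y by (simp add: h_def)
        fix k assume k: "k < length x"
        show "x ! k = h (x!i, x!j) ! k"
        proof (cases "k = i \<or> k = j")
          case False
          then have "y ! k = x ! k" using True k x by auto
          then show ?thesis using False by (simp add: h_def)
        qed (use ij y x in \<open>auto simp: h_def nth_list_update\<close>)
      qed
      then show ?thesis using x by auto
    next
      case False
      then show ?thesis unfolding emb2_def by (subst if_not_P[OF False]) simp
    qed
  qed
  have "apply_op N (emb2 N i j G) \<psi> y = (\<Sum>x\<in>strs N. emb2 N i j G y x * \<psi> x)"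
    using y by (simp add: apply_op_def)
  also have "\<dots> = (\<Sum>x\<in>range h. emb2 N i j G y x * \<psi> x)"
    by (rule sum.mono_neutral_right) (use sub zero in auto)
  also have "\<dots> = (\<Sum>ab\<in>UNIV. emb2 N i j G y (h ab) * \<psi> (h ab))"
    by (rule sum.reindex[OF inj[unfolded inj_on_def, folded inj_on_def], unfolded comp_def])
  also have "\<dots> = (\<Sum>ab\<in>UNIV. G (y!i, y!j) ab * \<psi> (y[i := fst ab, j := snd ab]))"
    using ij y by (intro sum.cong) (auto simp: emb2_def h_def nth_list_update)
  finally show ?thesis .
qed

lemma apply_emb1:
  assumes i: "i < N" and y: "length y = N"
  shows "apply_op N (emb1 N i G) \<psi> y = (\<Sum>b\<in>UNIV. G (y!i) b * \<psi> (y[i := b]))"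
proof -
  define h where "h b = y[i := b]" for b :: bool
  have inj: "inj h"
  proof (rule injI)
    fix a b assume "h a = h b"
    then have "h a ! i = h b ! i" by auto
    then show "a = b" using i y by (auto simp: h_def)
  qed
  have sub: "range h \<subseteq> strs N" using y by (auto simp: h_def)
  have zero: "\<forall>x\<in>strs N - range h. emb1 N i G y x * \<psi> x = 0"
  proof
    fix x assume x: "x \<in> strs N - range h"
    show "emb1 N i G y x * \<psi> x = 0"
    proof (cases "\<forall>k<N. k \<noteq> i \<longrightarrow> y ! k = x ! k")
      case True
      have "x = h (x!i)"
      proof (rule nth_equalityI)
        show "length x = length (h (x!i))" using x y by (simp add: h_def)
        fix k assume k: "k < length x"
        show "x ! k = h (x!i) ! k"
        proof (cases "k = i")
          case False
          then have "y ! k = x ! k" using True k x by auto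
          then show ?thesis using False by (simp add: h_def)
        qed (use i y x in \<open>auto simp: h_def nth_list_update\<close>)
      qed
      then show ?thesis using x by auto
    next
      case False
      then show ?thesis unfolding emb1_def by (subst if_not_P[OF False]) simp
    qed
  qed
  have "apply_op N (emb1 N i G) \<psi> y = (\<Sum>x\<in>strs N. emb1 N i G y x * \<psi> x)"
    using y by (simp add: apply_op_def)
  also have "\<dots> = (\<Sum>x\<in>range h. emb1 N i G y x * \<psi> x)"
    by (rule sum.mono_neutral_right) (use sub zero in auto)
  also have "\<dots> = (\<Sum>b\<in>UNIV. emb1 N i G y (h b) * \<psi> (h b))"
    by (rule sum.reindex[OF inj[unfolded inj_on_def, folded inj_on_def], unfolded comp_def])
  also have "\<dots> = (\<Sum>b\<in>UNIV. G (y!i) b * \<psi> (y[i := b]))"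
    using i y by (intro sum.cong) (auto simp: emb1_def h_def nth_list_update)
  finally show ?thesis .
qed

datatype gt = GH nat | GX nat nat | GP nat nat "bool \<Rightarrow> bool \<Rightarrow> real"

definition dmat :: "(bool \<Rightarrow> bool \<Rightarrow> real) \<Rightarrow> bool \<times> bool \<Rightarrow> bool \<times> bool \<Rightarrow> complex" where
  "dmat f a b = (if a = b then cis (f (fst a) (snd a)) else 0)"

fun gop :: "nat \<Rightarrow> gt \<Rightarrow> qop" where
  "gop N (GH q) = emb1 N q H_mat"
| "gop N (GX c t) = emb2 N c t CNOT_mat"
| "gop N (GP i j f) = emb2 N i j (dmat f)"

fun gok :: "nat \<Rightarrow> gt \<Rightarrow> bool" where
  "gok N (GH q) = (q < N)"
| "gok N (GX c t) = (c < N \<and> t < N \<and> c \<noteq> t)"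
| "gok N (GP i j f) = (i < N \<and> j < N \<and> i \<noteq> j)"

definition gstep :: "nat \<Rightarrow> gt \<Rightarrow> qstate \<Rightarrow> qstate" where
  "gstep N g \<psi> = apply_op N (gop N g) \<psi>"

lemma gstep_len: "length y \<noteq> N \<Longrightarrow> gstep N g \<psi> y = 0"
  by (simp add: gstep_def apply_op_def)

lemma UNIV_bool2: "(UNIV :: (bool \<times> bool) set) = {(False,False),(False,True),(True,False),(True,True)}"
  by auto

lemma gstep_H:
  assumes "q < N" "length y = N"
  shows "gstep N (GH q) \<psi> y =
     (\<psi> (y[q:=False]) + (if y!q then -1 else 1) * \<psi> (y[q:=True])) / complex_of_real (sqrt 2)"
  using assms by (simp add: gstep_def apply_emb1 UNIV_bool H_mat_def add_divide_distrib)

lemma gstep_X: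
  assumes "c < N" "t < N" "c \<noteq> t" "length y = N"
  shows "gstep N (GX c t) \<psi> y = \<psi> (y[t := (y!t \<noteq> y!c)])"
proof -
  have "gstep N (GX c t) \<psi> y = (\<Sum>ab\<in>UNIV. CNOT_mat (y!c, y!t) ab * \<psi> (y[c := fst ab, t := snd ab]))"
    using assms by (simp add: gstep_def apply_emb2)
  also have "\<dots> = (\<Sum>ab\<in>UNIV. if ab = (y!c, y!t \<noteq> y!c) then \<psi> (y[c := fst ab, t := snd ab]) else 0)"
    by (rule sum.cong) (auto simp: CNOT_mat_def)
  also have "\<dots> = \<psi> (y[c := y!c, t := (y!t \<noteq> y!c)])" by (simp add: sum.delta')
  also have "\<dots> = \<psi> (y[t := (y!t \<noteq> y!c)])" using assms by simp
  finally show ?thesis .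
qed

lemma gstep_P:
  assumes "i < N" "j < N" "i \<noteq> j" "length y = N"
  shows "gstep N (GP i j f) \<psi> y = cis (f (y!i) (y!j)) * \<psi> y"
proof -
  have "gstep N (GP i j f) \<psi> y = (\<Sum>ab\<in>UNIV. dmat f (y!i, y!j) ab * \<psi> (y[i := fst ab, j := snd ab]))"
    using assms by (simp add: gstep_def apply_emb2)
  also have "\<dots> = (\<Sum>ab\<in>UNIV. if ab = (y!i, y!j) then cis (f (y!i) (y!j)) * \<psi> (y[i := fst ab, j := snd ab]) else 0)"
    by (rule sum.cong) (auto simp: dmat_def)
  also have "\<dots> = cis (f (y!i) (y!j)) * \<psi> (y[i := y!i, j := y!j])" by (simp add: sum.delta')
  also have "\<dots> = cis (f (y!i) (y!j)) * \<psi> y" using assms by simp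
  finally show ?thesis .
qed


definition grun :: "nat \<Rightarrow> gt list \<Rightarrow> qstate \<Rightarrow> qstate" where
  "grun N gs \<psi> = foldl (\<lambda>\<psi> g. gstep N g \<psi>) \<psi> gs"

lemma grun_Nil[simp]: "grun N [] \<psi> = \<psi>" by (simp add: grun_def)
lemma grun_Cons[simp]: "grun N (g # gs) \<psi> = grun N gs (gstep N g \<psi>)" by (simp add: grun_def)
lemma grun_append[simp]: "grun N (gs @ hs) \<psi> = grun N hs (grun N gs \<psi>)" by (simp add: grun_def)
lemma grun_snoc: "grun N (gs @ [g]) \<psi> = gstep N g (grun N gs \<psi>)" by simp

lemma run_map_gop: "run N (map (gop N) gs) \<psi> = grun N gs \<psi>"
  by (induction gs arbitrary: \<psi>) (simp_all add: gstep_def)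

definition rst :: "nat \<Rightarrow> qstate \<Rightarrow> bool" where
  "rst N \<psi> \<longleftrightarrow> (\<forall>y. length y \<noteq> N \<longrightarrow> \<psi> y = 0)"

lemma rst_gstep: "rst N (gstep N g \<psi>)" by (simp add: rst_def gstep_len)
lemma rst_grun: "rst N \<psi> \<Longrightarrow> rst N (grun N gs \<psi>)"
  by (induction gs arbitrary: \<psi>) (simp_all add: rst_gstep)

definition pst :: "nat \<Rightarrow> (nat \<Rightarrow> bool \<Rightarrow> complex) \<Rightarrow> qstate" where
  "pst N \<phi> y = (if length y = N then (\<Prod>i<N. \<phi> i (y!i)) else 0)"

lemma rst_pst[simp]: "rst N (pst N \<phi>)" by (simp add: rst_def pst_def)

lemma pst_cong: "(\<And>i. i < N \<Longrightarrow> \<phi> i = \<phi>' i) \<Longrightarrow> pst N \<phi> = pst N \<phi>'"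
  by (rule ext) (auto simp: pst_def intro!: prod.cong)

definition dl :: "bool \<Rightarrow> bool \<Rightarrow> complex" where
  "dl a b = (if b = a then 1 else 0)"

lemma ket_pst: "length z = N \<Longrightarrow> ket z = pst N (\<lambda>i. dl (z!i))"
proof (rule ext)
  fix y assume z: "length z = N"
  show "ket z y = pst N (\<lambda>i. dl (z!i)) y"
  proof (cases "y = z")
    case True then show ?thesis using z by (simp add: ket_def pst_def dl_def)
  next
    case False
    show ?thesis
    proof (cases "length y = N")
      case True
      have "\<exists>i<N. y!i \<noteq> z!i"
      proof (rule ccontr)
        assume "\<not> (\<exists>i<N. y!i \<noteq> z!i)"
        then have "y = z" using True z by (intro nth_equalityI) auto
        then show False using False by simp
      qed
      then obtain i where i: "i < N" "y!i \<noteq> z!i" by blast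
      have "(\<Prod>i<N. dl (z!i) (y!i)) = 0"
        using i by (intro prod_zero) (auto simp: dl_def)
      then show ?thesis using False True by (simp add: ket_def pst_def)
    qed (use False in \<open>auto simp: ket_def pst_def\<close>)
  qed
qed

lemma prod_upd_other[simp]:
  "(\<Prod>x\<in>{..<N}-{q}. (\<phi>(q := v)) x (y!x)) = (\<Prod>x\<in>{..<N}-{q}. \<phi> x (y!x))"
  by (rule prod.cong) auto

lemma pst_split:
  assumes "q < N" "length y = N"
  shows "pst N \<phi> (y[q := a]) = \<phi> q a * (\<Prod>i\<in>{..<N}-{q}. \<phi> i (y!i))"
proof -
  have "pst N \<phi> (y[q := a]) = (\<Prod>i<N. \<phi> i (y[q:=a]!i))" using assms by (simp add: pst_def)
  also have "\<dots> = \<phi> q (y[q:=a]!q) * (\<Prod>i\<in>{..<N}-{q}. \<phi> i (y[q:=a]!i))"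
    using assms by (subst prod.remove[of _ q]) auto
  also have "\<dots> = \<phi> q a * (\<Prod>i\<in>{..<N}-{q}. \<phi> i (y!i))"
    using assms by (auto intro!: prod.cong)
  finally show ?thesis .
qed

lemma pst_split0:
  assumes "q < N" "length y = N"
  shows "pst N \<phi> y = \<phi> q (y!q) * (\<Prod>i\<in>{..<N}-{q}. \<phi> i (y!i))"
  using pst_split[OF assms, of \<phi> "y!q"] assms by simp

lemma pst_split_upd:
  assumes "q < N" "length y = N"
  shows "pst N (\<phi>(q := v)) y = v (y!q) * (\<Prod>i\<in>{..<N}-{q}. \<phi> i (y!i))"
proof -
  have "(\<Prod>x\<in>{..<N}-{q}. (\<phi>(q := v)) x (y!x)) = (\<Prod>x\<in>{..<N}-{q}. \<phi> x (y!x))"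
    by (rule prod.cong) auto
  then show ?thesis using pst_split0[OF assms, of "\<phi>(q := v)"] by simp
qed

definition hadT :: "(bool \<Rightarrow> complex) \<Rightarrow> bool \<Rightarrow> complex" where
  "hadT v b = (v False + (if b then -1 else 1) * v True) / complex_of_real (sqrt 2)"

lemma pst_H:
  assumes q: "q < N"
  shows "gstep N (GH q) (pst N \<phi>) = pst N (\<phi>(q := hadT (\<phi> q)))"
proof (rule ext)
  fix y
  show "gstep N (GH q) (pst N \<phi>) y = pst N (\<phi>(q := hadT (\<phi> q))) y"
  proof (cases "length y = N")
    case True
    let ?P = "\<Prod>i\<in>{..<N}-{q}. \<phi> i (y!i)"
    have "gstep N (GH q) (pst N \<phi>) y = (\<phi> q False * ?P + (if y!q then -1 else 1) * (\<phi> q True * ?P)) / complex_of_real (sqrt 2)"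
      using q True by (simp add: gstep_H pst_split)
    also have "\<dots> = hadT (\<phi> q) (y!q) * ?P" by (simp add: hadT_def algebra_simps add_divide_distrib)
    also have "\<dots> = pst N (\<phi>(q := hadT (\<phi> q))) y"
      using pst_split_upd[OF q True] by simp
    finally show ?thesis .
  qed (simp add: gstep_len pst_def)
qed

lemma pst_X_cl:
  assumes c: "c < N" "t < N" "c \<noteq> t" and cl: "\<phi> c = dl a"
  shows "gstep N (GX c t) (pst N \<phi>) = pst N (\<phi>(t := (\<lambda>b. \<phi> t (b \<noteq> a))))"
proof (rule ext)
  fix y
  show "gstep N (GX c t) (pst N \<phi>) y = pst N (\<phi>(t := (\<lambda>b. \<phi> t (b \<noteq> a)))) y"
  proof (cases "length y = N")
    case True
    show ?thesis
    proof (cases "y!c = a")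
      case yc: True
      have "gstep N (GX c t) (pst N \<phi>) y = \<phi> t (y!t \<noteq> a) * (\<Prod>i\<in>{..<N}-{t}. \<phi> i (y!i))"
        using c True yc by (simp add: gstep_X pst_split)
      also have "\<dots> = pst N (\<phi>(t := (\<lambda>b. \<phi> t (b \<noteq> a)))) y"
        using pst_split_upd[OF c(2) True] by simp
      finally show ?thesis .
    next
      case yc: False
      have l: "length (y[t := (y!t \<noteq> y!c)]) = N" using True by simp
      have "gstep N (GX c t) (pst N \<phi>) y = pst N \<phi> (y[t := (y!t \<noteq> y!c)])"
        using c True by (simp add: gstep_X)
      also have "\<dots> = 0"
        using pst_split0[OF c(1) l, of \<phi>] c yc cl by (simp add: dl_def)
      also have "\<dots> = pst N (\<phi>(t := (\<lambda>b. \<phi> t (b \<noteq> a)))) y"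
        using pst_split0[OF c(1) True, of "\<phi>(t := (\<lambda>b. \<phi> t (b \<noteq> a)))"] c yc cl by (simp add: dl_def)
      finally show ?thesis .
    qed
  qed (simp add: gstep_len pst_def)
qed

lemma pst_phase1:
  assumes q: "q < N"
  shows "cis (f (y!q)) * pst N \<phi> y = pst N (\<phi>(q := (\<lambda>b. cis (f b) * \<phi> q b))) y"
proof (cases "length y = N")
  case True
  show ?thesis
    using pst_split0[OF q True, of \<phi>] pst_split_upd[OF q True, of \<phi> "(\<lambda>b. cis (f b) * \<phi> q b)"]
    by simp
qed (simp add: pst_def)

fun updP :: "(nat \<times> (bool \<Rightarrow> real)) list \<Rightarrow> (nat \<Rightarrow> bool \<Rightarrow> complex) \<Rightarrow> nat \<Rightarrow> bool \<Rightarrow> complex" where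
  "updP [] \<phi> = \<phi>"
| "updP ((q,f) # ps) \<phi> = updP ps (\<phi>(q := (\<lambda>b. cis (f b) * \<phi> q b)))"

definition phsum :: "(nat \<times> (bool \<Rightarrow> real)) list \<Rightarrow> bool list \<Rightarrow> real" where
  "phsum ps y = sum_list (map (\<lambda>(q,f). f (y!q)) ps)"

lemma pst_phase:
  assumes "\<forall>p\<in>set ps. fst p < N"
  shows "cis (phsum ps y) * pst N \<phi> y = pst N (updP ps \<phi>) y"
  using assms
proof (induction ps arbitrary: \<phi>)
  case Nil then show ?case by (simp add: phsum_def)
next
  case (Cons p ps)
  obtain q f where p: "p = (q,f)" by force
  have "cis (phsum (p # ps) y) * pst N \<phi> y = cis (phsum ps y) * (cis (f (y!q)) * pst N \<phi> y)"
    by (simp add: phsum_def p cis_mult[symmetric] algebra_simps)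
  also have "\<dots> = cis (phsum ps y) * pst N (\<phi>(q := (\<lambda>b. cis (f b) * \<phi> q b))) y"
    using Cons.prems p by (simp add: pst_phase1)
  also have "\<dots> = pst N (updP (p # ps) \<phi>) y"
    using Cons p by simp
  finally show ?case .
qed

lemma updP_other: "q \<notin> fst ` set ps \<Longrightarrow> updP ps \<phi> q = \<phi> q"
proof (induction ps arbitrary: \<phi>)
  case (Cons p ps)
  then show ?case by (cases p) (auto simp: rev_image_eqI)
qed simp

lemma updP_at: "distinct (map fst ps) \<Longrightarrow> (q, f) \<in> set ps \<Longrightarrow> updP ps \<phi> q = (\<lambda>b. cis (f b) * \<phi> q b)"
proof (induction ps arbitrary: \<phi>)
  case (Cons p ps \<phi>)
  obtain q' f' where p: "p = (q', f')" by force
  note 2 = Cons[unfolded p]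
  show ?case
  proof (cases "q' = q")
    case True
    then have "f' = f" "q \<notin> fst ` set ps" using 2(2,3) by (auto simp: rev_image_eqI)
    then show ?thesis using True p by (simp add: updP_other)
  next
    case False
    then show ?thesis using 2 p by auto
  qed
qed simp

lemma pst_diag:
  assumes ps: "\<forall>p\<in>set ps. fst p < N"
  and eq: "\<And>y. length y = N \<Longrightarrow> pst N \<phi> y \<noteq> 0 \<Longrightarrow> cis (\<Phi> y) = cis (phsum ps y)"
  shows "(\<lambda>y. cis (\<Phi> y) * pst N \<phi> y) = pst N (updP ps \<phi>)"
proof (rule ext)
  fix y
  show "cis (\<Phi> y) * pst N \<phi> y = pst N (updP ps \<phi>) y"
  proof (cases "length y = N \<and> pst N \<phi> y \<noteq> 0")
    case True
    then show ?thesis using eq pst_phase[OF ps] by metis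
  next
    case False
    then have "pst N \<phi> y = 0" by (auto simp: pst_def)
    then show ?thesis using pst_phase[OF ps, of y \<phi>] by simp
  qed
qed

section \<open>CNOT networks and grouped diagonal layers\<close>

definition xsim :: "(nat \<times> nat) list \<Rightarrow> bool list \<Rightarrow> bool list" where
  "xsim cs y = foldl (\<lambda>y (c,t). y[t := (y!t \<noteq> y!c)]) y cs"

lemma xsim_Nil[simp]: "xsim [] y = y" by (simp add: xsim_def)
lemma xsim_Cons[simp]: "xsim ((c,t) # cs) y = xsim cs (y[t := (y!t \<noteq> y!c)])" by (simp add: xsim_def)
lemma xsim_append[simp]: "xsim (cs @ ds) y = xsim ds (xsim cs y)" by (simp add: xsim_def)
lemma xsim_len[simp]: "length (xsim cs y) = length y"
  by (induction cs arbitrary: y) (auto simp: xsim_def)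

definition cxok :: "nat \<Rightarrow> (nat \<times> nat) list \<Rightarrow> bool" where
  "cxok N cs \<longleftrightarrow> (\<forall>(c,t)\<in>set cs. c < N \<and> t < N \<and> c \<noteq> t)"

lemma xsim_inv:
  assumes "cxok N cs" "length y = N"
  shows "xsim (rev cs) (xsim cs y) = y"
  using assms
proof (induction cs arbitrary: y)
  case (Cons p cs)
  obtain c t where p: "p = (c,t)" by force
  have ok: "cxok N cs" "c < N" "t < N" "c \<noteq> t" using Cons.prems p by (auto simp: cxok_def)
  have "xsim (rev (p # cs)) (xsim (p # cs) y) = xsim [(c,t)] (xsim (rev cs) (xsim cs (y[t := (y!t \<noteq> y!c)])))"
    by (simp add: p)
  also have "\<dots> = xsim [(c,t)] (y[t := (y!t \<noteq> y!c)])" using Cons.IH[OF ok(1)] Cons.prems by simp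
  also have "\<dots> = y[t := ((y!t \<noteq> y!c) \<noteq> y!c)]" using ok Cons.prems by (simp add: list_update_overwrite)
  also have "((y!t \<noteq> y!c) \<noteq> y!c) = y!t" by auto
  finally show ?case using ok Cons.prems by simp
qed simp

definition gX :: "nat \<times> nat \<Rightarrow> gt" where "gX p = GX (fst p) (snd p)"
definition gP :: "nat \<times> nat \<times> (bool \<Rightarrow> bool \<Rightarrow> real) \<Rightarrow> gt" where
  "gP p = GP (fst p) (fst (snd p)) (snd (snd p))"

definition pok :: "nat \<Rightarrow> (nat \<times> nat \<times> (bool \<Rightarrow> bool \<Rightarrow> real)) list \<Rightarrow> bool" where
  "pok N L \<longleftrightarrow> (\<forall>(i,j,f)\<in>set L. i < N \<and> j < N \<and> i \<noteq> j)"

definition Phi :: "(nat \<times> nat \<times> (bool \<Rightarrow> bool \<Rightarrow> real)) list \<Rightarrow> bool list \<Rightarrow> real" where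
  "Phi L y = sum_list (map (\<lambda>(i,j,f). f (y!i) (y!j)) L)"

lemma grun_X:
  assumes "cxok N cs" "length y = N"
  shows "grun N (map gX cs) \<psi> y = \<psi> (xsim (rev cs) y)"
  using assms
proof (induction cs arbitrary: y rule: rev_induct)
  case (snoc p cs)
  obtain c t where p: "p = (c,t)" by force
  have ok: "cxok N cs" "c < N" "t < N" "c \<noteq> t" using snoc.prems p by (auto simp: cxok_def)
  show ?case using snoc.IH[OF ok(1)] ok snoc.prems by (simp add: p gX_def gstep_X)
qed simp

lemma grun_P:
  assumes "pok N L" "length y = N"
  shows "grun N (map gP L) \<psi> y = cis (Phi L y) * \<psi> y"
  using assms
proof (induction L arbitrary: y rule: rev_induct)
  case (snoc p L)
  obtain i j f where p: "p = (i,j,f)" by (cases p) auto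
  have ok: "pok N L" "i < N" "j < N" "i \<noteq> j" using snoc.prems p by (auto simp: pok_def)
  show ?case using snoc.IH[OF ok(1)] ok snoc.prems
    by (simp add: p gP_def gstep_P Phi_def cis_mult[symmetric] algebra_simps)
qed (simp add: Phi_def)

lemma grun_group:
  assumes cs: "cxok N cs" and L: "pok N L" and r: "rst N \<psi>"
  shows "grun N (map gX cs @ map gP L @ map gX (rev cs)) \<psi> = (\<lambda>y. cis (Phi L (xsim cs y)) * \<psi> y)"
proof (rule ext)
  fix y
  show "grun N (map gX cs @ map gP L @ map gX (rev cs)) \<psi> y = cis (Phi L (xsim cs y)) * \<psi> y"
  proof (cases "length y = N")
    case True
    have cs': "cxok N (rev cs)" using cs by (simp add: cxok_def)
    have "grun N (map gX cs @ map gP L @ map gX (rev cs)) \<psi> y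
        = grun N (map gX (rev cs)) (grun N (map gP L) (grun N (map gX cs) \<psi>)) y" by simp
    also have "\<dots> = grun N (map gP L) (grun N (map gX cs) \<psi>) (xsim cs y)"
      using grun_X[OF cs' True] by simp
    also have "\<dots> = cis (Phi L (xsim cs y)) * grun N (map gX cs) \<psi> (xsim cs y)"
      using grun_P[OF L] True by simp
    also have "\<dots> = cis (Phi L (xsim cs y)) * \<psi> y"
      using grun_X[OF cs, of "xsim cs y"] xsim_inv[OF cs True] True by simp
    finally show ?thesis .
  next
    case False
    have "rst N (grun N (map gX cs @ map gP L @ map gX (rev cs)) \<psi>)" using rst_grun[OF r] .
    then show ?thesis using False r by (simp add: rst_def)
  qed
qed

definition cnt :: "(nat \<times> nat) list \<Rightarrow> bool list \<Rightarrow> nat \<Rightarrow> nat" where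
  "cnt cs y q = length (filter (\<lambda>(c,t). t = q \<and> y!c) cs)"

lemma xsim_nth:
  assumes "\<forall>(c,t)\<in>set cs. c \<notin> snd ` set cs \<and> t < length y" "q < length y"
  shows "xsim cs y ! q = (y!q \<noteq> odd (cnt cs y q))"
  using assms
proof (induction cs arbitrary: y)
  case Nil then show ?case by (simp add: cnt_def)
next
  case (Cons p cs)
  obtain c t where p: "p = (c,t)" by force
  let ?y = "y[t := (y!t \<noteq> y!c)]"
  have ct: "c \<noteq> t" "t < length y" using Cons.prems p by auto
  have h: "\<forall>(c,t)\<in>set cs. c \<notin> snd ` set cs \<and> t < length ?y" using Cons.prems p by auto
  have ctl: "\<forall>(c',t')\<in>set cs. c' \<noteq> t" using Cons.prems p by (force simp: rev_image_eqI)
  have cc: "cnt cs ?y q = cnt cs y q"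
    unfolding cnt_def using ctl by (intro arg_cong[where f=length] filter_cong) auto
  have "xsim (p # cs) y ! q = (?y ! q \<noteq> odd (cnt cs y q))"
    using Cons.IH[OF h] Cons.prems cc by (simp add: p)
  moreover have "cnt (p # cs) y q = (if t = q \<and> y!c then Suc (cnt cs y q) else cnt cs y q)"
    by (simp add: cnt_def p)
  ultimately show ?case using ct Cons.prems by (auto simp: nth_list_update)
qed


lemma two_adic:
  fixes z :: int
  assumes "z \<noteq> 0"
  shows "\<exists>j q. z = 2^j * q \<and> odd q \<and> 2^j \<le> \<bar>z\<bar>"
  using assms
proof (induction "nat \<bar>z\<bar>" arbitrary: z rule: less_induct)
  case less
  show ?case
  proof (cases "odd z")
    case True
    then show ?thesis using less.prems by (intro exI[of _ 0] exI[of _ z]) auto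
  next
    case False
    then obtain z' where z': "z = 2 * z'" by auto
    then have "z' \<noteq> 0" "nat \<bar>z'\<bar> < nat \<bar>z\<bar>" using less.prems by auto
    then obtain j q where "z' = 2^j * q" "odd q" "2^j \<le> \<bar>z'\<bar>" using less.hyps by blast
    then show ?thesis using z' by (intro exI[of _ "Suc j"] exI[of _ q]) (auto simp: abs_mult)
  qed
qed

lemma cis_odd_pi:
  fixes q :: int
  assumes "odd q"
  shows "cis (pi * of_int q) = -1"
proof -
  obtain r where r: "q = 2 * r + 1" using assms oddE by blast
  have "pi * of_int q = 2 * pi * of_int r + pi" by (simp add: r algebra_simps)
  then have "cis (pi * of_int q) = cis (2 * pi * of_int r + pi)" by simp
  also have "\<dots> = cis (2 * pi * of_int r) * cis pi" by (simp only: cis_mult)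
  also have "cis (2 * pi * of_int r) = 1" by (rule cis_multiple_2pi) simp
  finally show ?thesis by simp
qed

lemma sum_strs_prod:
  "(\<Sum>M\<in>strs r. \<Prod>i<r. g i (M!i)) = (\<Prod>i<r. g i False + g i True :: 'a :: comm_ring_1)"
proof (induction r)
  case 0
  have "strs 0 = {[]}" by (auto simp: strs_def)
  then show ?case by simp
next
  case (Suc r)
  define h where "h = (\<lambda>(M :: bool list, b :: bool). M @ [b])"
  have inj: "inj_on h (strs r \<times> UNIV)"
    by (auto simp: inj_on_def h_def)
  have img: "h ` (strs r \<times> UNIV) = strs (Suc r)"
  proof
    show "h ` (strs r \<times> UNIV) \<subseteq> strs (Suc r)" by (auto simp: h_def)
    show "strs (Suc r) \<subseteq> h ` (strs r \<times> UNIV)"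
    proof
      fix M assume "M \<in> strs (Suc r)"
      then have "length M = Suc r" by simp
      then have "M = h (butlast M, last M)" "butlast M \<in> strs r"
        by (auto simp: h_def) (metis append_butlast_last_id list.size(3) nat.distinct(1))
      then show "M \<in> h ` (strs r \<times> UNIV)" by blast
    qed
  qed
  have "(\<Sum>M\<in>strs (Suc r). \<Prod>i<Suc r. g i (M!i)) = (\<Sum>p\<in>strs r \<times> UNIV. \<Prod>i<Suc r. g i (h p ! i))"
    by (subst img[symmetric], subst sum.reindex[OF inj]) simp
  also have "\<dots> = (\<Sum>p\<in>strs r \<times> UNIV. (\<Prod>i<r. g i (fst p ! i)) * g r (snd p))"
  proof (rule sum.cong)
    fix p assume "p \<in> strs r \<times> (UNIV :: bool set)"
    then obtain M b where p: "p = (M, b)" "length M = r" by auto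
    have "(\<Prod>i<r. g i (h p ! i)) = (\<Prod>i<r. g i (M ! i))"
      using p by (intro prod.cong) (auto simp: h_def nth_append)
    then show "(\<Prod>i<Suc r. g i (h p ! i)) = (\<Prod>i<r. g i (fst p ! i)) * g r (snd p)"
      using p by (simp add: h_def nth_append)
  qed simp
  also have "\<dots> = (\<Sum>M\<in>strs r. \<Sum>b\<in>UNIV. (\<Prod>i<r. g i (M ! i)) * g r b)"
    by (simp add: sum.cartesian_product case_prod_unfold)
  also have "\<dots> = (\<Sum>M\<in>strs r. (\<Prod>i<r. g i (M ! i))) * (g r False + g r True)"
    by (simp add: UNIV_bool sum.distrib sum_distrib_right[symmetric] sum_distrib_left[symmetric])
  also have "\<dots> = (\<Prod>i<Suc r. g i False + g i True)" using Suc by simp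
  finally show ?case .
qed

lemma neg1_card:
  "(-1::real) ^ card {i. i < (r::nat) \<and> P i} = (\<Prod>i<r. if P i then -1 else 1)"
proof -
  have "(\<Prod>i<r. if P i then -1 else (1::real)) = (\<Prod>i\<in>{..<r} \<inter> {i. P i}. -1) * (\<Prod>i\<in>{..<r} \<inter> - {i. P i}. 1)"
    by (subst prod.If_cases) auto
  also have "{..<r} \<inter> {i. P i} = {i. i < r \<and> P i}" by auto
  finally show ?thesis by simp
qed

lemma and_identity:
  assumes r: "r \<ge> 1"
  shows "(\<Sum>M\<in>strs r. (-1::real) ^ (card {i. i < r \<and> M!i} + 1) *
            (if odd (card {i. i < r \<and> M!i \<and> bb i}) then 1 else 0))
         = 2 ^ (r - 1) * (if \<forall>i<r. bb i then 1 else 0)"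
proof -
  have odd_eq: "(if odd k then 1 else 0) = (1 - (-1::real)^k) / 2" for k
    by (auto simp: )
  have A: "(\<Sum>M\<in>strs r. (-1::real) ^ card {i. i < r \<and> M!i}) = 0"
  proof -
    have "(\<Sum>M\<in>strs r. (-1::real) ^ card {i. i < r \<and> M!i}) = (\<Sum>M\<in>strs r. \<Prod>i<r. if M!i then -1 else 1)"
      by (simp add: neg1_card)
    also have "\<dots> = (\<Prod>i<r. (1::real) + -1)"
      using sum_strs_prod[where r=r and g="\<lambda>i b. if b then -1 else (1::real)"] by simp
    also have "\<dots> = 0" using r by simp
    finally show ?thesis .
  qed
  have B: "(\<Sum>M\<in>strs r. (-1::real) ^ card {i. i < r \<and> M!i} * (-1) ^ card {i. i < r \<and> M!i \<and> bb i})
      = 2 ^ r * (if \<forall>i<r. bb i then 1 else 0)"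
  proof -
    have "(\<Sum>M\<in>strs r. (-1::real) ^ card {i. i < r \<and> M!i} * (-1) ^ card {i. i < r \<and> M!i \<and> bb i})
       = (\<Sum>M\<in>strs r. \<Prod>i<r. if M!i then (if bb i then 1 else -1) else 1)"
      by (intro sum.cong refl) (auto simp: neg1_card prod.distrib[symmetric] intro!: prod.cong)
    also have "\<dots> = (\<Prod>i<r. (1::real) + (if bb i then 1 else -1))"
      using sum_strs_prod[where r=r and g="\<lambda>i b. if b then (if bb i then 1 else -1) else (1::real)"] by simp
    also have "\<dots> = (\<Prod>i<r. if bb i then 2 else 0)" by (intro prod.cong) auto
    also have "\<dots> = 2 ^ r * (if \<forall>i<r. bb i then 1 else 0)"
    proof (cases "\<forall>i<r. bb i")
      case True then show ?thesis by simp
    next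
      case False
      then obtain i where "i < r" "\<not> bb i" by auto
      then show ?thesis by (auto intro!: prod_zero)
    qed
    finally show ?thesis .
  qed
  have "(\<Sum>M\<in>strs r. (-1::real) ^ (card {i. i < r \<and> M!i} + 1) *
            (if odd (card {i. i < r \<and> M!i \<and> bb i}) then 1 else 0))
      = (\<Sum>M\<in>strs r. ((-1::real) ^ card {i. i < r \<and> M!i} * (-1) ^ card {i. i < r \<and> M!i \<and> bb i}
                          - (-1) ^ card {i. i < r \<and> M!i}) / 2)"
    by (intro sum.cong) (auto simp: odd_eq algebra_simps)
  also have "\<dots> = ((\<Sum>M\<in>strs r. (-1::real) ^ card {i. i < r \<and> M!i} * (-1) ^ card {i. i < r \<and> M!i \<and> bb i})
                   - (\<Sum>M\<in>strs r. (-1) ^ card {i. i < r \<and> M!i})) / 2"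
    by (simp only: sum_divide_distrib[symmetric] sum_subtractf)
  also have "\<dots> = 2 ^ r * (if \<forall>i<r. bb i then 1 else 0) / 2" using A B by simp
  also have "\<dots> = 2 ^ (r - 1) * (if \<forall>i<r. bb i then 1 else 0)"
    using r by (cases r) auto
  finally show ?thesis .
qed


lemma distinct_concat_pairs:
  assumes "distinct xs" "\<And>x. x \<in> set xs \<Longrightarrow> distinct (f x)"
  shows "distinct (concat (map (\<lambda>x. map (\<lambda>y. (x, y)) (f x)) xs))"
  using assms
proof (induction xs)
  case (Cons a xs)
  then show ?case by (auto simp: distinct_map inj_on_def)
qed simp

lemma concat_single:
  assumes "distinct xs" "x0 \<in> set xs" "\<And>x. x \<in> set xs \<Longrightarrow> x \<noteq> x0 \<Longrightarrow> h x = []"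
  shows "concat (map h xs) = h x0"
  using assms
proof (induction xs)
  case (Cons a xs)
  show ?case
  proof (cases "a = x0")
    case True
    then have "x0 \<notin> set xs" using Cons.prems by auto
    then have "concat (map h xs) = []" using Cons.prems True by (auto intro!: concat_eq_Nil_conv[THEN iffD2])
    then show ?thesis using True by simp
  next
    case False
    then show ?thesis using Cons by auto
  qed
qed simp

lemma sum_list_concat_map: "sum_list (concat (map f xs)) = sum_list (map (\<lambda>x. sum_list (f x)) xs)"
  by (induction xs) auto

lemma filter_upt_eq: "c < n \<Longrightarrow> filter (\<lambda>c'. c' = c) [0..<n] = [c]"
proof (induction n)
  case (Suc n)
  then show ?case by (cases "c = n") (auto simp: filter_empty_conv)
qed simp

lemma card_Suc_filter:
  "card {i. i < Suc n \<and> P i} = card {i. i < n \<and> P i} + (if P n then 1 else 0)"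
proof -
  have "{i. i < Suc n \<and> P i} = {i. i < n \<and> P i} \<union> (if P n then {n} else {})" by (auto simp: less_Suc_eq)
  then show ?thesis by (auto simp: card_insert_if)
qed

lemma odd_card_xor:
  "odd (card {i. i < (n::nat) \<and> M i \<and> (P i \<noteq> Q i)}) =
     (odd (card {i. i < n \<and> M i \<and> P i}) \<noteq> odd (card {i. i < n \<and> M i \<and> Q i}))"
  by (induction n) (auto simp: card_Suc_filter)

lemma sum_indicator_upt:
  "(\<Sum>c<(n::nat). if P c then 1 else 0 :: real) = real (card {c. c < n \<and> P c})"
proof (induction n)
  case (Suc n) then show ?case by (simp add: card_Suc_filter)
qed simp

fun benc :: "bool list \<Rightarrow> nat" where
  "benc [] = 0"
| "benc (b # M) = (if b then 1 else 0) + 2 * benc M"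

lemma benc_inj: "length M = length M' \<Longrightarrow> benc M = benc M' \<Longrightarrow> M = M'"
proof (induction M arbitrary: M')
  case (Cons b M)
  then obtain b' M'' where M': "M' = b' # M''" by (cases M') auto
  have eq: "(if b then 1 else 0) + 2 * benc M = (if b' then 1 else 0) + 2 * benc M''"
    using Cons.prems M' by simp
  have bb: "b = b'" using arg_cong[OF eq, of odd] by (simp split: if_splits)
  then have "benc M = benc M''" using eq by simp
  then have "M = M''" using Cons.IH Cons.prems M' by simp
  then show ?case using bb M' by simp
qed simp

lemma benc_lt: "benc M < 2 ^ length M"
  by (induction M) auto

lemma pe_le:
  assumes "a \<le> A" "b \<le> A"
  shows "prod_encode (a, b) \<le> (2 * A + 1)^2"
proof -
  have "triangle (a + b) \<le> (a + b) * (a + b + 1)" unfolding triangle_def by simp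
  then have "prod_encode (a, b) \<le> (a + b) * (a + b + 1) + a"
    unfolding prod_encode_def using assms by simp
  also have "\<dots> \<le> (2 * A) * (2 * A + 1) + A" using assms by (intro add_mono mult_mono) auto
  also have "\<dots> \<le> (2 * A + 1)^2" by (simp add: power2_eq_square algebra_simps)
  finally show ?thesis .
qed

definition hb :: "nat \<Rightarrow> nat" where "hb x = (2 * x + 1)^2"

lemma hb_ge: "x \<le> hb x" by (simp add: hb_def power2_eq_square)
lemma hb_mono: "x \<le> y \<Longrightarrow> hb x \<le> hb y" by (simp add: hb_def)

lemma pe_hb: "a \<le> A \<Longrightarrow> b \<le> A \<Longrightarrow> prod_encode (a, b) \<le> hb A"
  using pe_le by (simp add: hb_def)


locale tcc =
  fixes m :: nat and gs :: "tc_gate list" and outw :: nat and d :: nat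
  assumes wf: "tc_wf m d (gs, outw)"
begin

definition G where "G = length gs"
definition lits where "lits k = fst (gs ! k)"
definition thr where "thr k = fst (snd (gs ! k))"
definition lay where "lay k = gate_layer (gs ! k)"
definition nl where "nl k = length (lits k)"
definition wi where "wi k c = fst (lits k ! c)"
definition ng where "ng k c = snd (lits k ! c)"
definition W where "W = m + G"
definition K where "K = (LEAST K. W < 2 ^ K)"
definition BB where "BB = 4 * W + 5"
definition aa where "aa = hb (hb (hb (hb BB))) + 1"
definition N where "N = m + 1 + aa"

lemma wf_out: "outw < m + G" using wf by (simp add: tc_wf_def G_def)
lemma wf_lay: "k < G \<Longrightarrow> 1 \<le> lay k \<and> lay k \<le> d" using wf by (simp add: tc_wf_def G_def lay_def)
lemma wf_dist: "k < G \<Longrightarrow> distinct (map fst (lits k))" using wf by (simp add: tc_wf_def G_def lits_def)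
lemma wf_lit: "k < G \<Longrightarrow> lt \<in> set (lits k) \<Longrightarrow> fst lt < m + k \<and> (m \<le> fst lt \<longrightarrow> lay (fst lt - m) < lay k)"
  using wf by (simp add: tc_wf_def G_def lits_def lay_def)

lemma wi_lt: "k < G \<Longrightarrow> c < nl k \<Longrightarrow> wi k c < m + k"
  using wf_lit[of k "lits k ! c"] by (simp add: wi_def nl_def)
lemma wi_lay: "k < G \<Longrightarrow> c < nl k \<Longrightarrow> m \<le> wi k c \<Longrightarrow> lay (wi k c - m) < lay k"
  using wf_lit[of k "lits k ! c"] by (simp add: wi_def nl_def)

lemma nl_le: "k < G \<Longrightarrow> nl k \<le> m + k"
proof -
  assume k: "k < G"
  have "nl k = card (set (map fst (lits k)))"
    using distinct_card[OF wf_dist[OF k]] by (simp add: nl_def)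
  also have "\<dots> \<le> card {..<m+k}"
    using wf_lit[OF k] by (intro card_mono) auto
  finally show ?thesis by simp
qed

lemma nl_W: "k < G \<Longrightarrow> nl k \<le> W" using nl_le by (force simp: W_def)

lemma K_W: "W < 2 ^ K"
proof -
  have "W < 2 ^ W" by (rule less_exp)
  then show ?thesis unfolding K_def by (rule LeastI)
qed

lemma K_le: "2 ^ K \<le> 2 * W + 1"
proof (cases K)
  case (Suc K')
  have "K' < (LEAST K. W < 2 ^ K)" using Suc by (simp add: K_def)
  then have "\<not> W < 2 ^ K'" by (rule not_less_Least)
  then show ?thesis using Suc by simp
qed simp

lemma K_le2: "K \<le> 2 * W + 1"
  using K_le less_exp[of K] by linarith

definition qix :: "nat \<Rightarrow> nat \<Rightarrow> nat \<Rightarrow> nat \<Rightarrow> nat \<Rightarrow> nat" where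
  "qix tag k u j c = m + 1 + prod_encode (tag, prod_encode (k, prod_encode (u, prod_encode (j, c))))"

lemma qix_eq[simp]: "qix t k u j c = qix t' k' u' j' c' \<longleftrightarrow> t = t' \<and> k = k' \<and> u = u' \<and> j = j' \<and> c = c'"
  by (simp add: qix_def)

lemma qix_gt[simp]: "m < qix t k u j c" by (simp add: qix_def)
lemma qix_not_lt[simp]: "\<not> qix t k u j c < m" using qix_gt[of t k u j c] by linarith

lemma qix_neq_m[simp]: "qix t k u j c \<noteq> m" "m \<noteq> qix t k u j c" using qix_gt[of t k u j c] by linarith+

lemma qix_lt:
  assumes "t \<le> BB" "k \<le> BB" "u \<le> BB" "j \<le> BB" "c \<le> BB"
  shows "qix t k u j c < N"
proof -
  have "prod_encode (j, c) \<le> hb BB" using assms by (intro pe_hb)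
  then have "prod_encode (u, prod_encode (j, c)) \<le> hb (hb BB)"
    using assms hb_ge[of BB] by (intro pe_hb) auto
  then have "prod_encode (k, prod_encode (u, prod_encode (j, c))) \<le> hb (hb (hb BB))"
    using assms hb_ge[of BB] hb_ge[of "hb BB"] by (intro pe_hb) auto
  then have "prod_encode (t, prod_encode (k, prod_encode (u, prod_encode (j, c)))) \<le> hb (hb (hb (hb BB)))"
    using assms hb_ge[of BB] hb_ge[of "hb BB"] hb_ge[of "hb (hb BB)"] by (intro pe_hb) auto
  then show ?thesis by (simp add: qix_def N_def aa_def)
qed

definition oq where "oq k = qix 0 k 0 0 0"
definition rq where "rq k u j = qix 1 k u j 0"
definition rcq where "rcq k u j c = qix 2 k u j c"
definition wcq where "wcq k u j c = qix 3 k u j c"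
definition paq where "paq k u M = qix 4 k u (benc M) 0"
definition pdq where "pdq k u M = qix 5 k u (benc M) 0"
definition wq where "wq w = (if w < m then w else oq (w - m))"

lemmas qdefs = oq_def rq_def rcq_def wcq_def paq_def pdq_def

lemma wq_cases: "wq w < m \<or> wq w = oq (w - m)" by (auto simp: wq_def)

lemma wq_neq[simp]:
  "wq w \<noteq> m" "wq w \<noteq> rq k u j" "wq w \<noteq> rcq k u j c" "wq w \<noteq> wcq k u j c"
  "wq w \<noteq> paq k u M" "wq w \<noteq> pdq k u M"
  using wq_cases[of w] qix_gt[of 1 k u j 0] qix_gt[of 2 k u j c] qix_gt[of 3 k u j c]
    qix_gt[of 4 k u "benc M" 0] qix_gt[of 5 k u "benc M" 0]
  by (auto simp: qdefs)

lemma wq_neq'[simp]: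
  "rq k u j \<noteq> wq w" "rcq k u j c \<noteq> wq w" "wcq k u j c \<noteq> wq w"
  "paq k u M \<noteq> wq w" "pdq k u M \<noteq> wq w" "m \<noteq> wq w"
  using wq_neq[of w] by metis+

lemma q_neq[simp]:
  "oq k \<noteq> rq k2 u2 j2"
  "oq k \<noteq> rcq k2 u2 j2 c2"
  "oq k \<noteq> wcq k2 u2 j2 c2"
  "oq k \<noteq> paq k2 u2 M2"
  "oq k \<noteq> pdq k2 u2 M2"
  "rq k u j \<noteq> oq k2"
  "rq k u j \<noteq> rcq k2 u2 j2 c2"
  "rq k u j \<noteq> wcq k2 u2 j2 c2"
  "rq k u j \<noteq> paq k2 u2 M2"
  "rq k u j \<noteq> pdq k2 u2 M2"
  "rcq k u j c \<noteq> oq k2"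
  "rcq k u j c \<noteq> rq k2 u2 j2"
  "rcq k u j c \<noteq> wcq k2 u2 j2 c2"
  "rcq k u j c \<noteq> paq k2 u2 M2"
  "rcq k u j c \<noteq> pdq k2 u2 M2"
  "wcq k u j c \<noteq> oq k2"
  "wcq k u j c \<noteq> rq k2 u2 j2"
  "wcq k u j c \<noteq> rcq k2 u2 j2 c2"
  "wcq k u j c \<noteq> paq k2 u2 M2"
  "wcq k u j c \<noteq> pdq k2 u2 M2"
  "paq k u M \<noteq> oq k2"
  "paq k u M \<noteq> rq k2 u2 j2"
  "paq k u M \<noteq> rcq k2 u2 j2 c2"
  "paq k u M \<noteq> wcq k2 u2 j2 c2"
  "paq k u M \<noteq> pdq k2 u2 M2"
  "pdq k u M \<noteq> oq k2"
  "pdq k u M \<noteq> rq k2 u2 j2"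
  "pdq k u M \<noteq> rcq k2 u2 j2 c2"
  "pdq k u M \<noteq> wcq k2 u2 j2 c2"
  "pdq k u M \<noteq> paq k2 u2 M2"
  by (simp_all add: qdefs)

lemma q_inj[simp]:
  "oq k = oq k2 \<longleftrightarrow> k = k2"
  "rq k u j = rq k2 u2 j2 \<longleftrightarrow> k = k2 \<and> u = u2 \<and> j = j2"
  "rcq k u j c = rcq k2 u2 j2 c2 \<longleftrightarrow> k = k2 \<and> u = u2 \<and> j = j2 \<and> c = c2"
  "wcq k u j c = wcq k2 u2 j2 c2 \<longleftrightarrow> k = k2 \<and> u = u2 \<and> j = j2 \<and> c = c2"
  "paq k u M = paq k2 u2 M2 \<longleftrightarrow> k = k2 \<and> u = u2 \<and> benc M = benc M2"
  "pdq k u M = pdq k2 u2 M2 \<longleftrightarrow> k = k2 \<and> u = u2 \<and> benc M = benc M2"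
  by (simp_all add: qdefs)

lemma q_neq_m[simp]:
  "oq k \<noteq> m" "rq k u j \<noteq> m" "rcq k u j c \<noteq> m" "wcq k u j c \<noteq> m" "paq k u M \<noteq> m" "pdq k u M \<noteq> m"
  "m \<noteq> oq k" "m \<noteq> rq k u j" "m \<noteq> rcq k u j c" "m \<noteq> wcq k u j c" "m \<noteq> paq k u M" "m \<noteq> pdq k u M"
  by (simp_all add: qdefs)

lemma q_gt_m[simp]:
  "m < oq k" "m < rq k u j" "m < rcq k u j c" "m < wcq k u j c" "m < paq k u M" "m < pdq k u M"
  by (simp_all add: qdefs)

definition ctl where "ctl k u i = (if i = 0 then oq k else rq k u (i - 1))"

definition Ks where "Ks l = filter (\<lambda>k. lay k = l) [0..<G]"
definition Us where "Us k = filter (\<lambda>u. thr k \<le> int u) [0..<Suc (nl k)]"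
definition masks where "masks = List.n_lists (Suc K) [False, True]"

definition kujs where "kujs l = concat (map (\<lambda>k. map (\<lambda>uj. (k, uj)) (concat (map (\<lambda>u. map (\<lambda>j. (u, j)) [0..<K]) (Us k)))) (Ks l))"
definition kus where "kus l = concat (map (\<lambda>k. map (\<lambda>u. (k, u)) (Us k)) (Ks l))"
definition kuMs where "kuMs l = concat (map (\<lambda>ku. map (\<lambda>M. (ku, M)) masks) (kus l))"
definition kujcs where "kujcs l = concat (map (\<lambda>kuj. map (\<lambda>c. (kuj, c)) [0..<Suc (nl (fst kuj))]) (kujs l))"

lemma mem_concat_pairs[simp]:
  "(a, b) \<in> set (concat (map (\<lambda>x. map (\<lambda>y. (x, y)) (f x)) xs)) \<longleftrightarrow> a \<in> set xs \<and> b \<in> set (f a)"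
  by auto

lemma mem_Ks[simp]: "k \<in> set (Ks l) \<longleftrightarrow> k < G \<and> lay k = l" by (auto simp: Ks_def)
lemma mem_Us[simp]: "u \<in> set (Us k) \<longleftrightarrow> u \<le> nl k \<and> thr k \<le> int u" by (auto simp: Us_def)
lemma mem_masks[simp]: "M \<in> set masks \<longleftrightarrow> length M = Suc K"
  unfolding masks_def by (simp only: set_n_lists) auto
lemma mem_kujs[simp]: "(k, u, j) \<in> set (kujs l) \<longleftrightarrow> k < G \<and> lay k = l \<and> u \<le> nl k \<and> thr k \<le> int u \<and> j < K"
  unfolding kujs_def by (simp only: mem_concat_pairs) simp
lemma mem_kus[simp]: "(k, u) \<in> set (kus l) \<longleftrightarrow> k < G \<and> lay k = l \<and> u \<le> nl k \<and> thr k \<le> int u"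
  unfolding kus_def by (simp only: mem_concat_pairs) simp
lemma mem_kuMs[simp]: "((k, u), M) \<in> set (kuMs l) \<longleftrightarrow> k < G \<and> lay k = l \<and> u \<le> nl k \<and> thr k \<le> int u \<and> length M = Suc K"
  unfolding kuMs_def by (simp only: mem_concat_pairs) simp
lemma mem_kujcs[simp]: "((k, u, j), c) \<in> set (kujcs l) \<longleftrightarrow> k < G \<and> lay k = l \<and> u \<le> nl k \<and> thr k \<le> int u \<and> j < K \<and> c \<le> nl k"
  unfolding kujcs_def by (simp only: mem_concat_pairs) auto

lemma dist_Ks: "distinct (Ks l)" by (simp add: Ks_def)
lemma dist_Us: "distinct (Us k)" by (simp add: Us_def)
lemma dist_masks: "distinct masks" unfolding masks_def by (rule distinct_n_lists) simp
lemma dist_kujs: "distinct (kujs l)"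
  unfolding kujs_def by (intro distinct_concat_pairs dist_Ks distinct_concat_pairs dist_Us) auto
lemma dist_kus: "distinct (kus l)"
  unfolding kus_def by (intro distinct_concat_pairs dist_Ks dist_Us)
lemma dist_kuMs: "distinct (kuMs l)"
  unfolding kuMs_def by (intro distinct_concat_pairs dist_kus dist_masks)
lemma dist_kujcs: "distinct (kujcs l)"
  unfolding kujcs_def by (intro distinct_concat_pairs dist_kujs) auto

lemma bounds_BB:
  "G \<le> BB" "W \<le> BB" "K \<le> BB" "5 \<le> BB" "k < G \<Longrightarrow> nl k \<le> BB"
  "length M = Suc K \<Longrightarrow> benc M \<le> BB"
proof -
  show "G \<le> BB" "W \<le> BB" "K \<le> BB" "5 \<le> BB" using K_le2 by (auto simp: BB_def W_def)
  show "k < G \<Longrightarrow> nl k \<le> BB" using nl_W by (force simp: BB_def)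
  show "length M = Suc K \<Longrightarrow> benc M \<le> BB"
    using benc_lt[of M] K_le by (simp add: BB_def)
qed

lemma oq_lt: "k < G \<Longrightarrow> oq k < N"
  using bounds_BB(1,4) by (auto simp: oq_def intro!: qix_lt)
lemma rq_lt: "k < G \<Longrightarrow> u \<le> nl k \<Longrightarrow> j < K \<Longrightarrow> rq k u j < N"
  using bounds_BB(1,3,4) bounds_BB(5)[of k] by (auto simp: rq_def intro!: qix_lt)
lemma rcq_lt: "k < G \<Longrightarrow> u \<le> nl k \<Longrightarrow> j < K \<Longrightarrow> c \<le> nl k \<Longrightarrow> rcq k u j c < N"
  using bounds_BB(1,3,4) bounds_BB(5)[of k] by (auto simp: rcq_def intro!: qix_lt)
lemma wcq_lt: "k < G \<Longrightarrow> u \<le> nl k \<Longrightarrow> j < K \<Longrightarrow> c \<le> nl k \<Longrightarrow> wcq k u j c < N"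
  using bounds_BB(1,3,4) bounds_BB(5)[of k] by (auto simp: wcq_def intro!: qix_lt)
lemma paq_lt: "k < G \<Longrightarrow> u \<le> nl k \<Longrightarrow> length M = Suc K \<Longrightarrow> paq k u M < N"
  using bounds_BB(1,3,4) bounds_BB(5)[of k] bounds_BB(6)[of M] by (auto simp: paq_def intro!: qix_lt)
lemma pdq_lt: "k < G \<Longrightarrow> u \<le> nl k \<Longrightarrow> length M = Suc K \<Longrightarrow> pdq k u M < N"
  using bounds_BB(1,3,4) bounds_BB(5)[of k] bounds_BB(6)[of M] by (auto simp: pdq_def intro!: qix_lt)
lemma wq_lt: "w < m + G \<Longrightarrow> wq w < N"
  using oq_lt[of "w - m"] by (auto simp: wq_def N_def)
lemma m_lt: "m < N" by (simp add: N_def)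

end


lemma eval_gates_append: "eval_gates vs (g1 @ g2) = eval_gates (eval_gates vs g1) g2"
  by (induction g1 arbitrary: vs) auto

lemma eval_gates_len[simp]: "length (eval_gates vs g) = length vs + length g"
  by (induction g arbitrary: vs) auto

lemma eval_gates_prefix: "i < length vs \<Longrightarrow> eval_gates vs g ! i = vs ! i"
  by (induction g arbitrary: vs) (auto simp: nth_append)

lemma eval_gates_nth:
  assumes "k < length g"
  shows "eval_gates vs g ! (length vs + k) = gate_val (eval_gates vs (take k g)) (g ! k)"
proof -
  have g: "g = take k g @ [g ! k] @ drop (Suc k) g" using assms by (simp add: id_take_nth_drop)
  have "eval_gates vs g = eval_gates (eval_gates vs (take k g) @ [gate_val (eval_gates vs (take k g)) (g!k)]) (drop (Suc k) g)"
    by (subst g) (simp add: eval_gates_append)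
  then show ?thesis using assms by (simp add: eval_gates_prefix nth_append)
qed

lemma eval_gates_take: "i < length vs + k \<Longrightarrow> k \<le> length g \<Longrightarrow> eval_gates vs (take k g) ! i = eval_gates vs g ! i"
proof -
  assume a: "i < length vs + k" "k \<le> length g"
  have "eval_gates vs g = eval_gates (eval_gates vs (take k g)) (drop k g)"
    by (subst append_take_drop_id[symmetric, of g k]) (simp only: eval_gates_append)
  then show ?thesis using a by (simp add: eval_gates_prefix)
qed

context tcc begin

definition V where "V x = eval_gates x gs"

definition sk where "sk x k = card {c. c < nl k \<and> (V x ! wi k c \<noteq> ng k c)}"

lemma sk_le: "sk x k \<le> nl k"
proof -
  have "sk x k \<le> card {..<nl k}" unfolding sk_def by (intro card_mono) auto
  then show ?thesis by simp
qed

lemma V_input: "length x = m \<Longrightarrow> w < m \<Longrightarrow> V x ! w = x ! w"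
  by (simp add: V_def eval_gates_prefix)

lemma V_gate:
  assumes x: "length x = m" and k: "k < G"
  shows "V x ! (m + k) = (thr k \<le> int (sk x k))"
proof -
  have "V x ! (m + k) = gate_val (eval_gates x (take k gs)) (gs ! k)"
    using eval_gates_nth[of k gs x] x k by (simp add: V_def G_def)
  also have "\<dots> = gate_val (V x) (gs ! k)"
  proof -
    have "filter (lit_val (eval_gates x (take k gs))) (lits k) = filter (lit_val (V x)) (lits k)"
    proof (rule filter_cong[OF refl])
      fix lt assume "lt \<in> set (lits k)"
      then have "fst lt < m + k" using wf_lit[OF k] by blast
      then show "lit_val (eval_gates x (take k gs)) lt = lit_val (V x) lt"
        using x k by (simp add: lit_val_def V_def eval_gates_take G_def)
    qed
    then show ?thesis by (simp add: gate_val_def lits_def)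
  qed
  also have "\<dots> = (thr k \<le> int (length (filter (lit_val (V x)) (lits k))))"
    by (simp add: gate_val_def lits_def thr_def)
  also have "length (filter (lit_val (V x)) (lits k)) = sk x k"
    by (simp add: length_filter_conv_card sk_def lit_val_def nl_def wi_def ng_def)
  finally show ?thesis .
qed

lemma tc_eval_V: "tc_eval x (gs, outw) = V x ! outw"
  by (simp add: tc_eval_def V_def)

definition th where "th j = pi / 2 ^ j"

definition ph1 where
  "ph1 k u j c = (\<lambda>r v. if c < nl k then (if r \<and> (v \<noteq> ng k c) then th j else 0)
                        else (if r then - (th j * real u) else 0))"

definition qs1 where "qs1 l = map oq (Ks l) @ map (\<lambda>(k,u,j). rq k u j) (kujs l)"
definition qsR where "qsR l = map (\<lambda>(k,u,j). rq k u j) (kujs l)"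
definition qsO where "qsO l = map oq (Ks l)"

definition cs1p where
  "cs1p kuj = (case kuj of (k,u,j) \<Rightarrow>
     map (\<lambda>c. (rq k u j, rcq k u j c)) [0..<Suc (nl k)] @ map (\<lambda>c. (wq (wi k c), wcq k u j c)) [0..<nl k])"
definition cs1 where "cs1 l = concat (map cs1p (kujs l))"
definition L1 where "L1 l = map (\<lambda>((k,u,j),c). (rcq k u j c, wcq k u j c, ph1 k u j c)) (kujcs l)"

definition cs2p where
  "cs2p kuM = (case kuM of ((k,u),M) \<Rightarrow> map (\<lambda>i. (ctl k u i, paq k u M)) (filter (\<lambda>i. M!i) [0..<Suc K]))"
definition cs2 where "cs2 l = concat (map cs2p (kuMs l))"

definition coef where "coef M = pi / 2 ^ K * (-1) ^ (card {i. i < Suc K \<and> M!i} + 1)"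
definition negp where "negp M = odd (card {i. i < Suc K \<and> M!i \<and> 1 \<le> i})"
definition ph2 where "ph2 M = (\<lambda>a v. if a \<noteq> negp M then coef M else 0)"
definition L2 where "L2 l = map (\<lambda>((k,u),M). (paq k u M, pdq k u M, ph2 M)) (kuMs l)"

definition block where
  "block l = map GH (qs1 l) @ map gX (cs1 l) @ map gP (L1 l) @ map gX (rev (cs1 l)) @ map GH (qsR l)
     @ map gX (cs2 l) @ map gP (L2 l) @ map gX (rev (cs2 l)) @ map GH (qsO l)"

lemma mem_cs1p:
  "(a, t) \<in> set (cs1p (k,u,j)) \<longleftrightarrow> (\<exists>c. (c \<le> nl k \<and> a = rq k u j \<and> t = rcq k u j c) \<or> (c < nl k \<and> a = wq (wi k c) \<and> t = wcq k u j c))"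
  by (auto simp: cs1p_def less_Suc_eq_le image_iff simp del: upt_Suc)

lemma mem_cs1:
  "(a, t) \<in> set (cs1 l) \<longleftrightarrow> (\<exists>k u j c. (k,u,j) \<in> set (kujs l) \<and>
      ((c \<le> nl k \<and> a = rq k u j \<and> t = rcq k u j c) \<or> (c < nl k \<and> a = wq (wi k c) \<and> t = wcq k u j c)))"
proof -
  have "(a,t) \<in> set (cs1 l) \<longleftrightarrow> (\<exists>kuj \<in> set (kujs l). (a,t) \<in> set (cs1p kuj))" by (simp add: cs1_def)
  also have "\<dots> \<longleftrightarrow> (\<exists>k u j. (k,u,j) \<in> set (kujs l) \<and> (a,t) \<in> set (cs1p (k,u,j)))"
    by (metis prod_cases3)
  finally show ?thesis by (simp only: mem_cs1p) blast
qed

lemma mem_cs2p: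
  "(a, t) \<in> set (cs2p ((k,u),M)) \<longleftrightarrow> (\<exists>i. i < Suc K \<and> M!i \<and> a = ctl k u i \<and> t = paq k u M)"
  by (auto simp: cs2p_def image_iff simp del: upt_Suc)

lemma mem_cs2:
  "(a, t) \<in> set (cs2 l) \<longleftrightarrow> (\<exists>k u M i. ((k,u),M) \<in> set (kuMs l) \<and> i < Suc K \<and> M!i \<and> a = ctl k u i \<and> t = paq k u M)"
proof -
  have "(a,t) \<in> set (cs2 l) \<longleftrightarrow> (\<exists>kuM \<in> set (kuMs l). (a,t) \<in> set (cs2p kuM))" by (simp add: cs2_def)
  also have "\<dots> \<longleftrightarrow> (\<exists>k u M. ((k,u),M) \<in> set (kuMs l) \<and> (a,t) \<in> set (cs2p ((k,u),M)))"
    by (metis prod.collapse)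
  finally show ?thesis by (simp only: mem_cs2p) blast
qed

end


lemma supp:
  assumes "pst N \<phi> y \<noteq> 0" "length y = N" "q < N"
  shows "\<phi> q (y!q) \<noteq> 0"
  using assms pst_split0[OF assms(3,2), of \<phi>] by auto

lemma supp_dl:
  assumes "pst N \<phi> y \<noteq> 0" "length y = N" "q < N" "\<phi> q = dl v"
  shows "y!q = v"
  using supp[OF assms(1-3)] assms(4) by (auto simp: dl_def split: if_splits)

lemma grun_Hs:
  assumes "distinct qs" "\<forall>q\<in>set qs. q < N"
  shows "grun N (map GH qs) (pst N \<phi>) = pst N (\<lambda>q. if q \<in> set qs then hadT (\<phi> q) else \<phi> q)"
  using assms
proof (induction qs arbitrary: \<phi>)
  case (Cons q qs)
  have "grun N (map GH (q # qs)) (pst N \<phi>) = grun N (map GH qs) (pst N (\<phi>(q := hadT (\<phi> q))))"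
    using Cons.prems by (simp add: pst_H)
  also have "\<dots> = pst N (\<lambda>q'. if q' \<in> set qs then hadT ((\<phi>(q := hadT (\<phi> q))) q') else (\<phi>(q := hadT (\<phi> q))) q')"
    using Cons by simp
  also have "(\<lambda>q'. if q' \<in> set qs then hadT ((\<phi>(q := hadT (\<phi> q))) q') else (\<phi>(q := hadT (\<phi> q))) q')
      = (\<lambda>q'. if q' \<in> set (q # qs) then hadT (\<phi> q') else \<phi> q')"
    using Cons.prems by (auto intro!: ext)
  finally show ?case .
qed simp

lemma sqrt2_sq: "complex_of_real (sqrt 2) * complex_of_real (sqrt 2) = 2"
proof -
  have "complex_of_real (sqrt 2) * complex_of_real (sqrt 2) = complex_of_real (sqrt 2 * sqrt 2)"
    by (simp only: of_real_mult)
  also have "sqrt 2 * sqrt 2 = (2::real)" by simp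
  finally show ?thesis by simp
qed

lemma hadT_dl0: "hadT (dl False) = (\<lambda>b. 1 / complex_of_real (sqrt 2))"
  by (auto simp: hadT_def dl_def intro!: ext)

lemma hadT_eval: "hadT (\<lambda>b. (if b then B else A) / complex_of_real (sqrt 2)) = (\<lambda>b. (A + (if b then -1 else 1) * B) / 2)"
proof (rule ext)
  fix b
  have s: "complex_of_real (sqrt 2) \<noteq> 0" by simp
  show "hadT (\<lambda>b. (if b then B else A) / complex_of_real (sqrt 2)) b = (A + (if b then -1 else 1) * B) / 2"
    unfolding hadT_def using s sqrt2_sq by (simp add: field_simps)
qed

lemma reg_val:
  "hadT (\<lambda>b. cis (if b then \<alpha> else 0) * hadT (dl False) b)
     = (\<lambda>b. if b then (1 - cis \<alpha>) / 2 else (1 + cis \<alpha>) / 2)"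
proof -
  have "(\<lambda>b. cis (if b then \<alpha> else 0) * hadT (dl False) b) = (\<lambda>b. (if b then cis \<alpha> else 1) / complex_of_real (sqrt 2))"
    by (auto simp: hadT_dl0 intro!: ext)
  then show ?thesis by (auto simp: hadT_eval intro!: ext)
qed

lemma out_val:
  "hadT (\<lambda>b. cis (if b \<and> g then pi else 0) * hadT (dl False) b) = dl g"
proof -
  have "(\<lambda>b. cis (if b \<and> g then pi else 0) * hadT (dl False) b) = (\<lambda>b. (if b then (if g then -1 else 1) else 1) / complex_of_real (sqrt 2))"
    by (auto simp: hadT_dl0 intro!: ext)
  then show ?thesis by (auto simp: hadT_eval dl_def intro!: ext)
qed

lemma cnt_alt: "cnt cs y t = length (filter (\<lambda>p. y ! fst p) (filter (\<lambda>p. snd p = t) cs))"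
  by (simp add: cnt_def filter_filter case_prod_unfold conj_commute)

lemma All_less_Suc2: "(\<forall>i<Suc n. P i) \<longleftrightarrow> P 0 \<and> (\<forall>j<n. P (Suc j))"
  using less_Suc_eq_0_disj by auto

lemma sum_upt_Suc_split: "sum_list (map g [0..<Suc n]) = sum_list (map g [0..<n]) + (g n :: real)"
  by simp

lemma sum_list_upt_set: "sum_list (map g [0..<n]) = (\<Sum>c<n. g c :: real)"
  by (simp add: sum_set_upt_conv_sum_list_nat[symmetric] atLeast0LessThan)


context tcc begin

definition Inv where
  "Inv x b l \<phi> \<longleftrightarrow> (\<forall>w<m. \<phi> w = dl (x!w)) \<and> \<phi> m = dl b \<and>
     (\<forall>k<G. lay k < l \<longrightarrow> \<phi> (oq k) = dl (V x ! (m+k))) \<and>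
     (\<forall>k<G. l \<le> lay k \<longrightarrow> (\<forall>t u j c. \<phi> (qix t k u j c) = dl False))"

lemma wire_cl:
  assumes inv: "Inv x b l \<phi>" and x: "length x = m" and k: "k < G" "lay k = l" and c: "c < nl k"
  shows "\<phi> (wq (wi k c)) = dl (V x ! wi k c)"
proof (cases "wi k c < m")
  case True
  then show ?thesis using inv x by (simp add: wq_def Inv_def V_input)
next
  case False
  define k' where "k' = wi k c - m"
  have k': "k' < G" "lay k' < l" "m + k' = wi k c"
    using wi_lt[OF k(1) c] wi_lay[OF k(1) c] False k by (auto simp: k'_def)
  then show ?thesis using inv False by (simp add: wq_def Inv_def k'_def[symmetric])
qed

definition ps1 where
  "ps1 x l = map (\<lambda>(k,u,j). (rq k u j, \<lambda>r. if r then th j * (real (sk x k) - real u) else 0)) (kujs l)"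

lemma tgt_cs1: "(a, t) \<in> set (cs1 l) \<Longrightarrow> \<exists>k u j c. t = rcq k u j c \<or> t = wcq k u j c"
  unfolding mem_cs1 by blast

lemma ctl_cs1: "(a, t) \<in> set (cs1 l) \<Longrightarrow> (\<exists>k u j. a = rq k u j) \<or> (\<exists>w. a = wq w)"
  unfolding mem_cs1 by blast

lemma cs1_ok: "(a, t) \<in> set (cs1 l) \<Longrightarrow> a < N \<and> t < N \<and> a \<noteq> t \<and> a \<notin> snd ` set (cs1 l)"
proof -
  assume at: "(a, t) \<in> set (cs1 l)"
  then obtain k u j c where kuj: "(k,u,j) \<in> set (kujs l)" and
    cs: "(c \<le> nl k \<and> a = rq k u j \<and> t = rcq k u j c) \<or> (c < nl k \<and> a = wq (wi k c) \<and> t = wcq k u j c)"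
    unfolding mem_cs1 by blast
  have kb: "k < G" "u \<le> nl k" "j < K" using kuj by auto
  have "a < N \<and> t < N \<and> a \<noteq> t"
    using cs
  proof
    assume "c \<le> nl k \<and> a = rq k u j \<and> t = rcq k u j c"
    then show ?thesis using rq_lt[OF kb] rcq_lt[OF kb] by auto
  next
    assume h: "c < nl k \<and> a = wq (wi k c) \<and> t = wcq k u j c"
    have "wi k c < m + G" using wi_lt[OF kb(1), of c] h kb(1) by linarith
    then show ?thesis using h wq_lt wcq_lt[OF kb] by auto
  qed
  moreover have "a \<notin> snd ` set (cs1 l)"
  proof
    assume "a \<in> snd ` set (cs1 l)"
    then obtain a' where "(a', a) \<in> set (cs1 l)" by force
    then obtain k' u' j' c' where "a = rcq k' u' j' c' \<or> a = wcq k' u' j' c'" using tgt_cs1 by blast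
    then show False using ctl_cs1[OF at] by auto
  qed
  ultimately show ?thesis by blast
qed

lemma filter_cs1_rc:
  assumes "(k,u,j) \<in> set (kujs l)" "c \<le> nl k"
  shows "filter (\<lambda>p. snd p = rcq k u j c) (cs1 l) = [(rq k u j, rcq k u j c)]"
proof -
  have "filter (\<lambda>p. snd p = rcq k u j c) (cs1 l) = concat (map (\<lambda>x. filter (\<lambda>p. snd p = rcq k u j c) (cs1p x)) (kujs l))"
    by (simp add: cs1_def filter_concat comp_def)
  also have "\<dots> = filter (\<lambda>p. snd p = rcq k u j c) (cs1p (k,u,j))"
  proof (rule concat_single[OF dist_kujs assms(1)])
    fix x assume x: "x \<in> set (kujs l)" "x \<noteq> (k,u,j)"
    obtain k' u' j' where x': "x = (k',u',j')" by (cases x) auto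
    show "filter (\<lambda>p. snd p = rcq k u j c) (cs1p x) = []"
      using x x' by (auto simp: filter_empty_conv mem_cs1p rcq_def wcq_def)
  qed
  also have "\<dots> = [(rq k u j, rcq k u j c)]"
    using assms by (simp add: cs1p_def filter_map comp_def rcq_def wcq_def filter_upt_eq del: upt_Suc)
  finally show ?thesis .
qed

lemma filter_cs1_wc:
  assumes "(k,u,j) \<in> set (kujs l)" "c < nl k"
  shows "filter (\<lambda>p. snd p = wcq k u j c) (cs1 l) = [(wq (wi k c), wcq k u j c)]"
proof -
  have "filter (\<lambda>p. snd p = wcq k u j c) (cs1 l) = concat (map (\<lambda>x. filter (\<lambda>p. snd p = wcq k u j c) (cs1p x)) (kujs l))"
    by (simp add: cs1_def filter_concat comp_def)
  also have "\<dots> = filter (\<lambda>p. snd p = wcq k u j c) (cs1p (k,u,j))"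
  proof (rule concat_single[OF dist_kujs assms(1)])
    fix x assume x: "x \<in> set (kujs l)" "x \<noteq> (k,u,j)"
    obtain k' u' j' where x': "x = (k',u',j')" by (cases x) auto
    show "filter (\<lambda>p. snd p = wcq k u j c) (cs1p x) = []"
      using x x' by (auto simp: filter_empty_conv mem_cs1p rcq_def wcq_def)
  qed
  also have "\<dots> = [(wq (wi k c), wcq k u j c)]"
    using assms by (simp add: cs1p_def filter_map comp_def rcq_def wcq_def filter_upt_eq del: upt_Suc)
  finally show ?thesis .
qed

lemma filter_cs1_wcn:
  "filter (\<lambda>p. snd p = wcq k u j (nl k)) (cs1 l) = []"
  by (auto simp: filter_empty_conv mem_cs1 rcq_def wcq_def)

lemma xsim1:
  assumes y: "length y = N" and kuj: "(k,u,j) \<in> set (kujs l)"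
  shows "c \<le> nl k \<Longrightarrow> y ! rcq k u j c = False \<Longrightarrow> xsim (cs1 l) y ! rcq k u j c = y ! rq k u j"
    and "c < nl k \<Longrightarrow> y ! wcq k u j c = False \<Longrightarrow> xsim (cs1 l) y ! wcq k u j c = y ! wq (wi k c)"
    and "y ! wcq k u j (nl k) = False \<Longrightarrow> xsim (cs1 l) y ! wcq k u j (nl k) = False"
proof -
  have pre: "\<forall>(c,t)\<in>set (cs1 l). c \<notin> snd ` set (cs1 l) \<and> t < length y"
    using cs1_ok y by auto
  have kb: "k < G" "u \<le> nl k" "j < K" using kuj by auto
  show "c \<le> nl k \<Longrightarrow> y ! rcq k u j c = False \<Longrightarrow> xsim (cs1 l) y ! rcq k u j c = y ! rq k u j"
    using xsim_nth[OF pre, of "rcq k u j c"] rcq_lt[OF kb] y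
    by (simp add: cnt_alt filter_cs1_rc[OF kuj])
  show "c < nl k \<Longrightarrow> y ! wcq k u j c = False \<Longrightarrow> xsim (cs1 l) y ! wcq k u j c = y ! wq (wi k c)"
    using xsim_nth[OF pre, of "wcq k u j c"] wcq_lt[OF kb] y
    by (simp add: cnt_alt filter_cs1_wc[OF kuj])
  show "y ! wcq k u j (nl k) = False \<Longrightarrow> xsim (cs1 l) y ! wcq k u j (nl k) = False"
    using xsim_nth[OF pre, of "wcq k u j (nl k)"] wcq_lt[OF kb] y
    by (simp add: cnt_alt filter_cs1_wcn)
qed

end


context tcc begin

lemma sum_list_pairs: "sum_list (map F (concat (map (\<lambda>a. map (\<lambda>c. (a,c)) (h a)) xs))) = sum_list (map (\<lambda>a. sum_list (map (\<lambda>c. F (a,c)) (h a))) xs)"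
  by (induction xs) (simp_all add: comp_def)

lemma Phi_L1: "Phi (L1 l) z = sum_list (map (\<lambda>(k,u,j). sum_list (map (\<lambda>c. ph1 k u j c (z ! rcq k u j c) (z ! wcq k u j c)) [0..<Suc (nl k)])) (kujs l))"
proof -
  have "Phi (L1 l) z = sum_list (map (\<lambda>((k,u,j),c). ph1 k u j c (z ! rcq k u j c) (z ! wcq k u j c)) (kujcs l))"
    unfolding Phi_def L1_def by (simp add: comp_def case_prod_unfold)
  also have "\<dots> = sum_list (map (\<lambda>kuj. sum_list (map (\<lambda>c. (\<lambda>((k,u,j),c). ph1 k u j c (z ! rcq k u j c) (z ! wcq k u j c)) (kuj, c)) [0..<Suc (nl (fst kuj))])) (kujs l))"
    unfolding kujcs_def by (rule sum_list_pairs)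
  also have "\<dots> = sum_list (map (\<lambda>(k,u,j). sum_list (map (\<lambda>c. ph1 k u j c (z ! rcq k u j c) (z ! wcq k u j c)) [0..<Suc (nl k)])) (kujs l))"
    by (intro arg_cong[where f=sum_list] map_cong refl) (auto split: prod.splits)
  finally show ?thesis .
qed

lemma phase1:
  assumes x: "length x = m" and y: "length y = N" and nz: "pst N \<phi>1 y \<noteq> 0"
    and A1: "\<And>k u j c. k < G \<Longrightarrow> lay k = l \<Longrightarrow> u \<le> nl k \<Longrightarrow> j < K \<Longrightarrow> c \<le> nl k \<Longrightarrow>
               \<phi>1 (rcq k u j c) = dl False \<and> \<phi>1 (wcq k u j c) = dl False"
    and A2: "\<And>k c. k < G \<Longrightarrow> lay k = l \<Longrightarrow> c < nl k \<Longrightarrow> \<phi>1 (wq (wi k c)) = dl (V x ! wi k c)"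
  shows "Phi (L1 l) (xsim (cs1 l) y) = phsum (ps1 x l) y"
proof -
  let ?z = "xsim (cs1 l) y"
  have item: "sum_list (map (\<lambda>c. ph1 k u j c (?z ! rcq k u j c) (?z ! wcq k u j c)) [0..<Suc (nl k)])
      = (if y ! rq k u j then th j * (real (sk x k) - real u) else 0)"
    if kuj: "(k,u,j) \<in> set (kujs l)" for k u j
  proof -
    have kb: "k < G" "lay k = l" "u \<le> nl k" "j < K" using kuj by auto
    have yrc: "y ! rcq k u j c = False" if "c \<le> nl k" for c
      using supp_dl[OF nz y rcq_lt[OF kb(1,3,4) that]] A1[OF kb that] by blast
    have ywc: "y ! wcq k u j c = False" if "c \<le> nl k" for c
      using supp_dl[OF nz y wcq_lt[OF kb(1,3,4) that]] A1[OF kb that] by blast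
    have ywq: "y ! wq (wi k c) = V x ! wi k c" if "c < nl k" for c
    proof -
      have "wi k c < m + G" using wi_lt[OF kb(1) that] kb(1) by linarith
      then show ?thesis using supp_dl[OF nz y wq_lt] A2[OF kb(1,2) that] by blast
    qed
    have zrc: "?z ! rcq k u j c = y ! rq k u j" if "c \<le> nl k" for c
      using xsim1(1)[OF y kuj that yrc[OF that]] .
    have zwc: "?z ! wcq k u j c = V x ! wi k c" if "c < nl k" for c
      using xsim1(2)[OF y kuj that ywc] ywq[OF that] that by simp
    have zwn: "?z ! wcq k u j (nl k) = False"
      using xsim1(3)[OF y kuj ywc] by simp
    have s1: "sum_list (map (\<lambda>c. ph1 k u j c (?z ! rcq k u j c) (?z ! wcq k u j c)) [0..<Suc (nl k)])
        = (\<Sum>c<nl k. ph1 k u j c (?z ! rcq k u j c) (?z ! wcq k u j c)) + ph1 k u j (nl k) (?z ! rcq k u j (nl k)) (?z ! wcq k u j (nl k))"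
      by (simp add: sum_list_upt_set del: upt_Suc)
    have s2: "(\<Sum>c<nl k. ph1 k u j c (?z ! rcq k u j c) (?z ! wcq k u j c))
        = (\<Sum>c<nl k. if y ! rq k u j \<and> (V x ! wi k c \<noteq> ng k c) then th j else 0)"
      by (intro sum.cong refl) (simp add: zrc zwc ph1_def)
    have s3: "ph1 k u j (nl k) (?z ! rcq k u j (nl k)) (?z ! wcq k u j (nl k)) = (if y ! rq k u j then - (th j * real u) else 0)"
      by (simp add: zrc zwn ph1_def)
    show ?thesis
    proof (cases "y ! rq k u j")
      case True
      have "(\<Sum>c<nl k. if y ! rq k u j \<and> (V x ! wi k c \<noteq> ng k c) then th j else 0)
          = th j * (\<Sum>c<nl k. if V x ! wi k c \<noteq> ng k c then 1 else 0)"
        using True by (simp add: sum_distrib_left if_distrib cong: if_cong)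
      also have "\<dots> = th j * real (sk x k)" by (simp add: sum_indicator_upt sk_def)
      finally show ?thesis using True s1 s2 s3 by (simp add: algebra_simps)
    qed (use s1 s2 s3 in simp)
  qed
  have "Phi (L1 l) ?z = sum_list (map (\<lambda>(k,u,j). if y ! rq k u j then th j * (real (sk x k) - real u) else 0) (kujs l))"
    unfolding Phi_L1 by (intro arg_cong[where f=sum_list] map_cong refl) (auto simp: item simp del: upt_Suc mem_kujs)
  also have "\<dots> = phsum (ps1 x l) y"
    by (simp add: phsum_def ps1_def comp_def case_prod_unfold)
  finally show ?thesis .
qed

end


context tcc begin

definition gv where "gv x k = (thr k \<le> int (sk x k))"
definition ps2 where "ps2 x l = map (\<lambda>k. (oq k, \<lambda>b. if b \<and> gv x k then pi else 0)) (Ks l)"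

lemma ctl_lt: "k < G \<Longrightarrow> u \<le> nl k \<Longrightarrow> i < Suc K \<Longrightarrow> ctl k u i < N"
  by (auto simp: ctl_def intro!: oq_lt rq_lt)

lemma ctl_neq[simp]: "ctl k u i \<noteq> paq k' u' M" by (simp add: ctl_def)

lemma cs2_ok: "(a, t) \<in> set (cs2 l) \<Longrightarrow> a < N \<and> t < N \<and> a \<noteq> t \<and> a \<notin> snd ` set (cs2 l)"
proof -
  assume at: "(a, t) \<in> set (cs2 l)"
  then obtain k u M i where h: "((k,u),M) \<in> set (kuMs l)" "i < Suc K" "M!i" "a = ctl k u i" "t = paq k u M"
    unfolding mem_cs2 by blast
  have "a < N \<and> t < N \<and> a \<noteq> t" using h by (auto intro!: ctl_lt paq_lt)
  moreover have "a \<notin> snd ` set (cs2 l)"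
  proof
    assume "a \<in> snd ` set (cs2 l)"
    then obtain a' where "(a', a) \<in> set (cs2 l)" by force
    then show False unfolding mem_cs2 using h by auto
  qed
  ultimately show ?thesis by blast
qed

lemma filter_cs2:
  assumes "((k,u),M) \<in> set (kuMs l)"
  shows "filter (\<lambda>p. snd p = paq k u M) (cs2 l) = cs2p ((k,u),M)"
proof -
  have "filter (\<lambda>p. snd p = paq k u M) (cs2 l) = concat (map (\<lambda>x. filter (\<lambda>p. snd p = paq k u M) (cs2p x)) (kuMs l))"
    by (simp add: cs2_def filter_concat comp_def)
  also have "\<dots> = filter (\<lambda>p. snd p = paq k u M) (cs2p ((k,u),M))"
  proof (rule concat_single[OF dist_kuMs assms(1)])
    fix z assume z: "z \<in> set (kuMs l)" "z \<noteq> ((k,u),M)"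
    obtain k' u' M' where z': "z = ((k',u'),M')" by (metis prod.collapse)
    have "paq k' u' M' \<noteq> paq k u M"
      using z z' assms benc_inj[of M' M] by auto
    then show "filter (\<lambda>p. snd p = paq k u M) (cs2p z) = []"
      using z' by (auto simp: filter_empty_conv mem_cs2p)
  qed
  also have "\<dots> = cs2p ((k,u),M)"
    by (rule filter_True) (auto simp: mem_cs2p cs2p_def)
  finally show ?thesis .
qed

lemma xsim2:
  assumes y: "length y = N" and kuM: "((k,u),M) \<in> set (kuMs l)" and y0: "y ! paq k u M = False"
  shows "xsim (cs2 l) y ! paq k u M = odd (card {i. i < Suc K \<and> M!i \<and> y ! ctl k u i})"
proof -
  have pre: "\<forall>(c,t)\<in>set (cs2 l). c \<notin> snd ` set (cs2 l) \<and> t < length y"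
    using cs2_ok y by auto
  have kb: "k < G" "u \<le> nl k" "length M = Suc K" using kuM by auto
  have "cnt (cs2 l) y (paq k u M) = length (filter (\<lambda>p. y ! fst p) (cs2p ((k,u),M)))"
    by (simp add: cnt_alt filter_cs2[OF kuM])
  also have "\<dots> = length (filter (\<lambda>i. M!i \<and> y ! ctl k u i) [0..<Suc K])"
    by (simp add: cs2p_def filter_map comp_def filter_filter del: upt_Suc)
  also have "\<dots> = card {i. i < Suc K \<and> M!i \<and> y ! ctl k u i}"
    by (simp add: length_filter_conv_card del: upt_Suc, intro arg_cong[where f=card] Collect_cong, auto simp del: upt_Suc)
  finally show ?thesis
    using xsim_nth[OF pre, of "paq k u M"] paq_lt[OF kb] y y0 by simp
qed

lemma sum_masks: "sum_list (map F masks) = (\<Sum>M\<in>strs (Suc K). F M :: real)"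
proof -
  have "set masks = strs (Suc K)" by auto
  then show ?thesis using sum_list_distinct_conv_sum_set[OF dist_masks, of F] by simp
qed

lemma Phi_L2: "Phi (L2 l) z = sum_list (map (\<lambda>(k,u). sum_list (map (\<lambda>M. ph2 M (z ! paq k u M) (z ! pdq k u M)) masks)) (kus l))"
proof -
  have "Phi (L2 l) z = sum_list (map (\<lambda>((k,u),M). ph2 M (z ! paq k u M) (z ! pdq k u M)) (kuMs l))"
    unfolding Phi_def L2_def by (simp add: comp_def case_prod_unfold)
  also have "\<dots> = sum_list (map (\<lambda>ku. sum_list (map (\<lambda>M. (\<lambda>((k,u),M). ph2 M (z ! paq k u M) (z ! pdq k u M)) (ku, M)) masks)) (kus l))"
    unfolding kuMs_def by (rule sum_list_pairs)
  also have "\<dots> = sum_list (map (\<lambda>(k,u). sum_list (map (\<lambda>M. ph2 M (z ! paq k u M) (z ! pdq k u M)) masks)) (kus l))"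
    by (intro arg_cong[where f=sum_list] map_cong refl) (auto split: prod.splits)
  finally show ?thesis .
qed

lemma reg_support:
  assumes y: "length y = N" and nz: "pst N \<phi>3 y \<noteq> 0" and ku: "(k,u) \<in> set (kus l)"
    and B2: "\<And>j. j < K \<Longrightarrow> \<phi>3 (rq k u j) = (\<lambda>b. if b then (1 - cis (th j * (real (sk x k) - real u))) / 2
                                                   else (1 + cis (th j * (real (sk x k) - real u))) / 2)"
  shows "(\<forall>j<K. \<not> y ! rq k u j) \<longleftrightarrow> sk x k = u"
proof
  have kb: "k < G" "u \<le> nl k" using ku by auto
  assume all: "\<forall>j<K. \<not> y ! rq k u j"
  show "sk x k = u"
  proof (rule ccontr)
    assume ne: "sk x k \<noteq> u"
    define z where "z = int (sk x k) - int u"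
    have "z \<noteq> 0" using ne by (simp add: z_def)
    then obtain j q where jq: "z = 2^j * q" "odd q" "2^j \<le> \<bar>z\<bar>" using two_adic by blast
    have "\<bar>z\<bar> \<le> int (nl k)" using sk_le[of x k] kb by (auto simp: z_def)
    also have "\<dots> \<le> int W" using nl_W[OF kb(1)] by simp
    also have "\<dots> < 2 ^ K" using K_W by (metis of_nat_less_iff of_nat_numeral of_nat_power)
    finally have "(2::int)^j < 2^K" using jq(3) by linarith
    then have jK: "j < K" by (simp add: power_strict_increasing_iff)
    have "th j * (real (sk x k) - real u) = pi * of_int q"
    proof -
      have "real (sk x k) - real u = of_int z" by (simp add: z_def)
      also have "\<dots> = 2^j * of_int q" by (simp add: jq(1))
      finally show ?thesis by (simp add: th_def)
    qed
    then have "cis (th j * (real (sk x k) - real u)) = -1" using cis_odd_pi[OF jq(2)] by simp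
    then have "\<phi>3 (rq k u j) False = 0" using B2[OF jK] by simp
    moreover have "\<phi>3 (rq k u j) (y ! rq k u j) \<noteq> 0" using supp[OF nz y rq_lt[OF kb jK]] .
    ultimately show False using all jK by auto
  qed
next
  have kb: "k < G" "u \<le> nl k" using ku by auto
  assume eq: "sk x k = u"
  show "\<forall>j<K. \<not> y ! rq k u j"
  proof (intro allI impI)
    fix j assume j: "j < K"
    have "\<phi>3 (rq k u j) True = 0" using B2[OF j] eq by simp
    moreover have "\<phi>3 (rq k u j) (y ! rq k u j) \<noteq> 0" using supp[OF nz y rq_lt[OF kb j]] .
    ultimately show "\<not> y ! rq k u j" by auto
  qed
qed

lemma phase2:
  assumes y: "length y = N" and nz: "pst N \<phi>3 y \<noteq> 0"
    and B1: "\<And>k u M. k < G \<Longrightarrow> lay k = l \<Longrightarrow> u \<le> nl k \<Longrightarrow> length M = Suc K \<Longrightarrow> \<phi>3 (paq k u M) = dl False"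
    and B2: "\<And>k u j. (k,u,j) \<in> set (kujs l) \<Longrightarrow> \<phi>3 (rq k u j) = (\<lambda>b. if b then (1 - cis (th j * (real (sk x k) - real u))) / 2
                                                   else (1 + cis (th j * (real (sk x k) - real u))) / 2)"
  shows "Phi (L2 l) (xsim (cs2 l) y) = phsum (ps2 x l) y"
proof -
  let ?z = "xsim (cs2 l) y"
  have inner: "sum_list (map (\<lambda>M. ph2 M (?z ! paq k u M) (?z ! pdq k u M)) masks)
       = (if y ! oq k \<and> sk x k = u then pi else 0)" if ku: "(k,u) \<in> set (kus l)" for k u
  proof -
    have kb: "k < G" "lay k = l" "u \<le> nl k" using ku by auto
    define bb where "bb i = (y ! ctl k u i \<noteq> (1 \<le> i))" for i
    have zp: "?z ! paq k u M = odd (card {i. i < Suc K \<and> M!i \<and> y ! ctl k u i})" if M: "length M = Suc K" for M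
    proof -
      have "y ! paq k u M = False" using supp_dl[OF nz y paq_lt[OF kb(1,3) M]] B1[OF kb M] by blast
      moreover have "((k,u),M) \<in> set (kuMs l)" using kb M ku by simp
      ultimately show ?thesis using xsim2[OF y] by blast
    qed
    have trm: "ph2 M (?z ! paq k u M) (?z ! pdq k u M)
        = pi / 2 ^ K * ((-1) ^ (card {i. i < Suc K \<and> M!i} + 1) * (if odd (card {i. i < Suc K \<and> M!i \<and> bb i}) then 1 else 0))"
      if M: "length M = Suc K" for M
    proof -
      have "(odd (card {i. i < Suc K \<and> M!i \<and> y ! ctl k u i}) \<noteq> negp M) = odd (card {i. i < Suc K \<and> M!i \<and> bb i})"
        unfolding negp_def bb_def by (rule odd_card_xor[symmetric])
      then show ?thesis using zp[OF M] by (simp add: ph2_def coef_def)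
    qed
    have "sum_list (map (\<lambda>M. ph2 M (?z ! paq k u M) (?z ! pdq k u M)) masks)
        = (\<Sum>M\<in>strs (Suc K). pi / 2 ^ K * ((-1) ^ (card {i. i < Suc K \<and> M!i} + 1) * (if odd (card {i. i < Suc K \<and> M!i \<and> bb i}) then 1 else 0)))"
      unfolding sum_masks by (intro sum.cong refl) (simp add: trm)
    also have "\<dots> = pi / 2 ^ K * (\<Sum>M\<in>strs (Suc K). (-1) ^ (card {i. i < Suc K \<and> M!i} + 1) * (if odd (card {i. i < Suc K \<and> M!i \<and> bb i}) then 1 else 0))"
      by (simp add: sum_distrib_left)
    also have "\<dots> = pi / 2 ^ K * (2 ^ K * (if \<forall>i<Suc K. bb i then 1 else 0))"
      using and_identity[of "Suc K" bb] by simp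
    also have "\<dots> = (if \<forall>i<Suc K. bb i then pi else 0)" by simp
    also have "(\<forall>i<Suc K. bb i) \<longleftrightarrow> y ! oq k \<and> (\<forall>j<K. \<not> y ! rq k u j)"
      unfolding All_less_Suc2 bb_def ctl_def by simp
    also have "(\<forall>j<K. \<not> y ! rq k u j) \<longleftrightarrow> sk x k = u"
      by (rule reg_support[OF y nz ku], rule B2) (use ku in simp)
    finally show ?thesis .
  qed
  have "Phi (L2 l) ?z = sum_list (map (\<lambda>(k,u). if y ! oq k \<and> sk x k = u then pi else 0) (kus l))"
    unfolding Phi_L2 by (intro arg_cong[where f=sum_list] map_cong refl) (auto simp: inner simp del: mem_kus)
  also have "\<dots> = sum_list (map (\<lambda>k. sum_list (map (\<lambda>u. (\<lambda>(k,u). if y ! oq k \<and> sk x k = u then pi else 0) (k,u)) (Us k))) (Ks l))"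
    unfolding kus_def by (rule sum_list_pairs)
  also have "\<dots> = sum_list (map (\<lambda>k. if y ! oq k \<and> gv x k then pi else 0) (Ks l))"
  proof (intro arg_cong[where f=sum_list] map_cong refl)
    fix k assume k: "k \<in> set (Ks l)"
    have "sum_list (map (\<lambda>u. if y ! oq k \<and> sk x k = u then pi else 0) (Us k))
        = (\<Sum>u\<in>set (Us k). if sk x k = u then (if y ! oq k then pi else 0) else 0)"
      by (simp add: sum_list_distinct_conv_sum_set[OF dist_Us])
    also have "\<dots> = (if sk x k \<in> set (Us k) then (if y ! oq k then pi else 0) else 0)"
      by (simp add: sum.delta)
    also have "\<dots> = (if y ! oq k \<and> gv x k then pi else 0)"
      using sk_le[of x k] by (auto simp: gv_def)
    finally show "sum_list (map (\<lambda>u. (\<lambda>(k,u). if y ! oq k \<and> sk x k = u then pi else 0) (k,u)) (Us k))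
        = (if y ! oq k \<and> gv x k then pi else 0)" by simp
  qed
  also have "\<dots> = phsum (ps2 x l) y"
    by (simp add: phsum_def ps2_def comp_def)
  finally show ?thesis .
qed

end


context tcc begin

lemma img3: "q \<in> (\<lambda>(a,b,c). f a b c) ` S \<longleftrightarrow> (\<exists>a b c. (a,b,c) \<in> S \<and> q = f a b c)"
proof
  assume "q \<in> (\<lambda>(a,b,c). f a b c) ` S"
  then obtain z where "z \<in> S" "q = (\<lambda>(a,b,c). f a b c) z" by blast
  then show "\<exists>a b c. (a,b,c) \<in> S \<and> q = f a b c" by (cases z) auto
next
  assume "\<exists>a b c. (a,b,c) \<in> S \<and> q = f a b c"
  then obtain a b c where "(a,b,c) \<in> S" "q = f a b c" by blast
  then show "q \<in> (\<lambda>(a,b,c). f a b c) ` S" by (intro image_eqI[of _ _ "(a,b,c)"]) auto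
qed


lemma lt_m_neq[simp]: "w < m \<Longrightarrow> w \<noteq> oq k" "w < m \<Longrightarrow> w \<noteq> rq k u j"
  by (simp_all add: qdefs qix_def)

lemma dist_qs1: "distinct (qs1 l)"
  unfolding qs1_def using dist_Ks dist_kujs
  by (auto simp: distinct_map inj_on_def case_prod_unfold)

lemma dist_qsR: "distinct (qsR l)"
  unfolding qsR_def using dist_kujs by (auto simp: distinct_map inj_on_def case_prod_unfold)

lemma dist_qsO: "distinct (qsO l)"
  unfolding qsO_def using dist_Ks by (auto simp: distinct_map inj_on_def)

lemma set_qs1: "q \<in> set (qs1 l) \<longleftrightarrow> (\<exists>k. k < G \<and> lay k = l \<and> (q = oq k \<or> (\<exists>u j. u \<le> nl k \<and> thr k \<le> int u \<and> j < K \<and> q = rq k u j)))"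
  unfolding qs1_def set_append set_map Un_iff img3 by auto

lemma set_qsR: "q \<in> set (qsR l) \<longleftrightarrow> (\<exists>k u j. (k,u,j) \<in> set (kujs l) \<and> q = rq k u j)"
  unfolding qsR_def set_map img3 by blast

lemma set_qsO: "q \<in> set (qsO l) \<longleftrightarrow> (\<exists>k. k < G \<and> lay k = l \<and> q = oq k)"
  unfolding qsO_def by auto

lemma fst_ps1: "q \<in> fst ` set (ps1 x l) \<longleftrightarrow> (\<exists>k u j. (k,u,j) \<in> set (kujs l) \<and> q = rq k u j)"
proof -
  have e: "fst \<circ> (\<lambda>(k,u,j). (rq k u j, \<lambda>r. if r then th j * (real (sk x k) - real u) else 0)) = (\<lambda>(k,u,j). rq k u j)"
    by (auto simp: fun_eq_iff)
  have "fst ` set (ps1 x l) = (\<lambda>(k,u,j). rq k u j) ` set (kujs l)"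
    unfolding ps1_def set_map image_comp e ..
  then show ?thesis by (simp only: img3)
qed

lemma fst_ps2: "q \<in> fst ` set (ps2 x l) \<longleftrightarrow> (\<exists>k. k < G \<and> lay k = l \<and> q = oq k)"
  unfolding ps2_def by (force simp: image_iff)

lemma dist_ps1: "distinct (map fst (ps1 x l))"
  unfolding ps1_def using dist_kujs by (auto simp: distinct_map inj_on_def case_prod_unfold comp_def)

lemma dist_ps2: "distinct (map fst (ps2 x l))"
  unfolding ps2_def using dist_Ks by (auto simp: distinct_map inj_on_def comp_def)

lemma L1_ok: "pok N (L1 l)"
  unfolding pok_def L1_def by (auto intro!: rcq_lt wcq_lt simp del: mem_kujcs) (auto)

lemma L2_ok: "pok N (L2 l)"
  unfolding pok_def L2_def by (auto intro!: paq_lt pdq_lt simp del: mem_kuMs) (auto)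

lemma cs1_cx: "cxok N (cs1 l)" using cs1_ok by (auto simp: cxok_def)
lemma cs2_cx: "cxok N (cs2 l)" using cs2_ok by (auto simp: cxok_def)

lemma block_step:
  assumes x: "length x = m" and inv: "Inv x b l \<phi>"
  shows "\<exists>\<phi>'. grun N (block l) (pst N \<phi>) = pst N \<phi>' \<and> Inv x b (Suc l) \<phi>'"
proof -
  have invs: "\<forall>w<m. \<phi> w = dl (x!w)" "\<phi> m = dl b"
     "\<forall>k<G. lay k < l \<longrightarrow> \<phi> (oq k) = dl (V x ! (m+k))"
     "\<forall>k<G. l \<le> lay k \<longrightarrow> (\<forall>t u j c. \<phi> (qix t k u j c) = dl False)"
    using inv by (auto simp: Inv_def)
  have fresh: "\<phi> (oq k) = dl False" "\<phi> (rq k u j) = dl False" "\<phi> (rcq k u j c) = dl False"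
    "\<phi> (wcq k u j c) = dl False" "\<phi> (paq k u M) = dl False"
    if "k < G" "lay k = l" for k u j c M
    using invs(4) that by (auto simp: qdefs)
  define \<phi>1 where "\<phi>1 = (\<lambda>q. if q \<in> set (qs1 l) then hadT (\<phi> q) else \<phi> q)"
  define \<phi>2 where "\<phi>2 = updP (ps1 x l) \<phi>1"
  define \<phi>3 where "\<phi>3 = (\<lambda>q. if q \<in> set (qsR l) then hadT (\<phi>2 q) else \<phi>2 q)"
  define \<phi>4 where "\<phi>4 = updP (ps2 x l) \<phi>3"
  define \<phi>5 where "\<phi>5 = (\<lambda>q. if q \<in> set (qsO l) then hadT (\<phi>4 q) else \<phi>4 q)"
  have qs1N: "\<forall>q\<in>set (qs1 l). q < N" by (auto simp: set_qs1 intro!: oq_lt rq_lt)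
  have qsRN: "\<forall>q\<in>set (qsR l). q < N" by (auto simp: set_qsR intro!: rq_lt)
  have qsON: "\<forall>q\<in>set (qsO l). q < N" by (auto simp: set_qsO intro!: oq_lt)
  have ps1N: "\<forall>p\<in>set (ps1 x l). fst p < N"
    using fst_ps1 by (force intro!: rq_lt)
  have ps2N: "\<forall>p\<in>set (ps2 x l). fst p < N"
    using fst_ps2 by (force intro!: oq_lt)
  have p1_rc: "\<phi>1 (rcq k u j c) = dl False" "\<phi>1 (wcq k u j c) = dl False" "\<phi>1 (paq k u M) = dl False"
    if "k < G" "lay k = l" for k u j c M
    using fresh[OF that] by (auto simp: \<phi>1_def set_qs1)
  have p1_w: "\<phi>1 (wq (wi k c)) = dl (V x ! wi k c)" if "k < G" "lay k = l" "c < nl k" for k c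
  proof -
    have "wq (wi k c) \<notin> set (qs1 l)"
    proof
      assume "wq (wi k c) \<in> set (qs1 l)"
      then obtain k' where k': "k' < G" "lay k' = l" "wq (wi k c) = oq k'"
        by (auto simp: set_qs1)
      have "\<not> oq k' < m" using q_gt_m(1)[of k'] by linarith
      then have "\<not> wi k c < m" using k' by (auto simp: wq_def)
      then have "k' = wi k c - m" using k' by (simp add: wq_def)
      then show False using wi_lay[OF that(1,3)] \<open>\<not> wi k c < m\<close> k' that by simp
    qed
    then show ?thesis using wire_cl[OF inv x that] by (simp add: \<phi>1_def)
  qed
  have S1: "grun N (map GH (qs1 l)) (pst N \<phi>) = pst N \<phi>1"
    unfolding \<phi>1_def by (rule grun_Hs[OF dist_qs1 qs1N])
  have S2: "grun N (map gX (rev (cs1 l))) (grun N (map gP (L1 l)) (grun N (map gX (cs1 l)) (pst N \<phi>1))) = pst N \<phi>2"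
  proof -
    have "grun N (map gX (rev (cs1 l))) (grun N (map gP (L1 l)) (grun N (map gX (cs1 l)) (pst N \<phi>1)))
        = grun N (map gX (cs1 l) @ map gP (L1 l) @ map gX (rev (cs1 l))) (pst N \<phi>1)" by simp
    also have "\<dots> = (\<lambda>y. cis (Phi (L1 l) (xsim (cs1 l) y)) * pst N \<phi>1 y)"
      by (rule grun_group[OF cs1_cx L1_ok rst_pst])
    also have "\<dots> = pst N \<phi>2" unfolding \<phi>2_def
    proof (rule pst_diag[OF ps1N])
      fix y assume y: "length y = N" "pst N \<phi>1 y \<noteq> 0"
      show "cis (Phi (L1 l) (xsim (cs1 l) y)) = cis (phsum (ps1 x l) y)"
        using phase1[OF x y(1) y(2), of l] p1_rc p1_w by simp
    qed
    finally show ?thesis .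
  qed
  have S3: "grun N (map GH (qsR l)) (pst N \<phi>2) = pst N \<phi>3"
    unfolding \<phi>3_def by (rule grun_Hs[OF dist_qsR qsRN])
  have p3_pa: "\<phi>3 (paq k u M) = dl False" if "k < G" "lay k = l" for k u M
  proof -
    have "paq k u M \<notin> fst ` set (ps1 x l)" by (auto simp: fst_ps1)
    then show ?thesis using p1_rc(3)[OF that]
      by (simp add: \<phi>3_def \<phi>2_def set_qsR updP_other)
  qed
  have p3_r: "\<phi>3 (rq k u j) = (\<lambda>b. if b then (1 - cis (th j * (real (sk x k) - real u))) / 2
                                    else (1 + cis (th j * (real (sk x k) - real u))) / 2)"
    if kuj: "(k,u,j) \<in> set (kujs l)" for k u j
  proof -
    let ?f = "\<lambda>r. if r then th j * (real (sk x k) - real u) else 0"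
    have mem: "(rq k u j, ?f) \<in> set (ps1 x l)" using kuj unfolding ps1_def set_map
      by (intro image_eqI[where x="(k,u,j)"]) simp_all
    have "\<phi>1 (rq k u j) = hadT (dl False)"
      using kuj fresh(2)[of k u j] by (auto simp: \<phi>1_def set_qs1)
    then have "\<phi>2 (rq k u j) = (\<lambda>b. cis (if b then th j * (real (sk x k) - real u) else 0) * hadT (dl False) b)"
      unfolding \<phi>2_def using updP_at[OF dist_ps1 mem] by (simp add: if_distrib)
    then show ?thesis using kuj by (simp add: \<phi>3_def set_qsR reg_val del: mem_kujs)
  qed
  have S4: "grun N (map gX (rev (cs2 l))) (grun N (map gP (L2 l)) (grun N (map gX (cs2 l)) (pst N \<phi>3))) = pst N \<phi>4"
  proof -
    have "grun N (map gX (rev (cs2 l))) (grun N (map gP (L2 l)) (grun N (map gX (cs2 l)) (pst N \<phi>3)))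
        = grun N (map gX (cs2 l) @ map gP (L2 l) @ map gX (rev (cs2 l))) (pst N \<phi>3)" by simp
    also have "\<dots> = (\<lambda>y. cis (Phi (L2 l) (xsim (cs2 l) y)) * pst N \<phi>3 y)"
      by (rule grun_group[OF cs2_cx L2_ok rst_pst])
    also have "\<dots> = pst N \<phi>4" unfolding \<phi>4_def
    proof (rule pst_diag[OF ps2N])
      fix y assume y: "length y = N" "pst N \<phi>3 y \<noteq> 0"
      show "cis (Phi (L2 l) (xsim (cs2 l) y)) = cis (phsum (ps2 x l) y)"
        using phase2[OF y(1) y(2), of l x] p3_pa p3_r by simp
    qed
    finally show ?thesis .
  qed
  have S5: "grun N (map GH (qsO l)) (pst N \<phi>4) = pst N \<phi>5"
    unfolding \<phi>5_def by (rule grun_Hs[OF dist_qsO qsON])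
  have run: "grun N (block l) (pst N \<phi>) = pst N \<phi>5"
    unfolding block_def using S1 S2 S3 S4 S5 by simp
  have unch: "\<phi>5 q = \<phi> q" if "\<not> (\<exists>k. k < G \<and> lay k = l \<and> (q = oq k \<or> (\<exists>u j. q = rq k u j)))" for q
    using that
    by (auto simp: \<phi>5_def \<phi>4_def \<phi>3_def \<phi>2_def \<phi>1_def set_qs1 set_qsR set_qsO updP_other fst_ps1 fst_ps2)
  have out: "\<phi>5 (oq k) = dl (V x ! (m + k))" if "k < G" "lay k = l" for k
  proof -
    have mem: "(oq k, \<lambda>b. if b \<and> gv x k then pi else 0) \<in> set (ps2 x l)"
      using that unfolding ps2_def set_map by (intro image_eqI[where x="k"]) simp_all
    have "\<phi>3 (oq k) = hadT (dl False)"
      using that fresh(1)[OF that]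
      by (simp add: \<phi>3_def \<phi>2_def \<phi>1_def set_qs1 set_qsR updP_other fst_ps1)
    then have "\<phi>4 (oq k) = (\<lambda>b. cis (if b \<and> gv x k then pi else 0) * hadT (dl False) b)"
      unfolding \<phi>4_def using updP_at[OF dist_ps2 mem] by simp
    then have "\<phi>5 (oq k) = dl (gv x k)"
      using that by (simp add: \<phi>5_def set_qsO out_val)
    then show ?thesis using V_gate[OF x that(1)] by (simp add: gv_def)
  qed
  have "Inv x b (Suc l) \<phi>5"
    unfolding Inv_def
  proof (intro conjI allI impI)
    fix w assume "w < m"
    then show "\<phi>5 w = dl (x!w)" using unch[of w] invs(1) by auto
  next
    show "\<phi>5 m = dl b" using unch[of m] invs(2) by auto
  next
    fix k assume k: "k < G" "lay k < Suc l"
    show "\<phi>5 (oq k) = dl (V x ! (m + k))"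
    proof (cases "lay k = l")
      case True then show ?thesis using out k by simp
    next
      case False
      then have "\<phi>5 (oq k) = \<phi> (oq k)" using unch[of "oq k"] by auto
      then show ?thesis using invs(3) k False by simp
    qed
  next
    fix k t u j c assume k: "k < G" "Suc l \<le> lay k"
    have "\<not> (\<exists>k'. k' < G \<and> lay k' = l \<and> (qix t k u j c = oq k' \<or> (\<exists>u' j'. qix t k u j c = rq k' u' j')))"
      using k by (auto simp: qdefs)
    then have "\<phi>5 (qix t k u j c) = \<phi> (qix t k u j c)" by (rule unch)
    then show "\<phi>5 (qix t k u j c) = dl False" using invs(4) k by simp
  qed
  then show ?thesis using run by blast
qed

end


datatype seg = SC "gt list" | SQ "(nat \<times> nat \<times> (bool \<Rightarrow> bool \<Rightarrow> real)) list"

fun toc :: "gt \<Rightarrow> cliff_gate" where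
  "toc (GH q) = Hg q"
| "toc (GX c t) = CNOTg c t"
| "toc (GP i j f) = Hg 0"

fun isCl :: "gt \<Rightarrow> bool" where
  "isCl (GH q) = True"
| "isCl (GX c t) = True"
| "isCl (GP i j f) = False"

definition Lc :: "(nat \<times> nat \<times> (bool \<Rightarrow> bool \<Rightarrow> real)) list \<Rightarrow> (nat \<times> nat \<times> (bool \<times> bool \<Rightarrow> bool \<times> bool \<Rightarrow> complex)) list" where
  "Lc L = map (\<lambda>(i,j,f). (i,j,dmat f)) L"

fun segU :: "nat \<Rightarrow> seg \<Rightarrow> qop" where
  "segU N (SC gs) = seq_op N (map (cliff_gate_op N) (map toc gs))"
| "segU N (SQ L) = seq_op N [layer_op N (Lc L)]"

fun sgates :: "seg \<Rightarrow> gt list" where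
  "sgates (SC gs) = gs"
| "sgates (SQ L) = map gP L"

fun isSC :: "seg \<Rightarrow> bool" where
  "isSC (SC gs) = True"
| "isSC (SQ L) = False"

fun segok :: "nat \<Rightarrow> seg \<Rightarrow> bool" where
  "segok N (SC gs) = (\<forall>g\<in>set gs. isCl g \<and> gok N g)"
| "segok N (SQ L) = (pok N L \<and> distinct (concat (map (\<lambda>(i,j,f). [i,j]) L)))"

lemma restr_rst: "rst N \<psi> \<Longrightarrow> restr N \<psi> = \<psi>"
  by (auto simp: restr_def rst_def fun_eq_iff)

lemma cliff_toc: "isCl g \<Longrightarrow> cliff_gate_op N (toc g) = gop N g"
  by (cases g) auto

lemma segU_apply:
  assumes "segok N s" "rst N \<psi>"
  shows "apply_op N (segU N s) \<psi> = grun N (sgates s) \<psi>"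
proof (cases s)
  case (SC gs)
  have e: "map (cliff_gate_op N) (map toc gs) = map (gop N) gs"
    using assms SC by (auto simp: cliff_toc)
  have "apply_op N (segU N s) \<psi> = run N (map (cliff_gate_op N) (map toc gs)) \<psi>"
    using assms SC by (simp only: segU.simps apply_seq_op restr_rst)
  also have "\<dots> = grun N gs \<psi>" unfolding e by (rule run_map_gop)
  finally show ?thesis using SC by simp
next
  case (SQ L)
  have e: "map (\<lambda>(i, j, G). emb2 N i j G) (Lc L) = map (gop N) (map gP L)"
    by (auto simp: Lc_def gP_def)
  have "apply_op N (segU N s) \<psi> = apply_op N (layer_op N (Lc L)) \<psi>"
    using assms SQ by (simp add: apply_seq_op restr_rst)
  also have "\<dots> = grun N (map gP L) \<psi>"
    unfolding layer_op_def apply_seq_op e using assms by (simp only: restr_rst run_map_gop)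
  finally show ?thesis using SQ by simp
qed

lemma rst_apply: "rst N (apply_op N U \<psi>)" by (simp add: rst_def apply_op_def)

lemma segs_apply:
  assumes "\<forall>s\<in>set segs. segok N s" "rst N \<psi>"
  shows "apply_op N (seq_op N (map (segU N) segs)) \<psi> = grun N (concat (map sgates segs)) \<psi>"
proof -
  have "run N (map (segU N) segs) \<psi> = grun N (concat (map sgates segs)) \<psi>"
    using assms
  proof (induction segs arbitrary: \<psi>)
    case (Cons s segs)
    have "run N (map (segU N) (s # segs)) \<psi> = run N (map (segU N) segs) (grun N (sgates s) \<psi>)"
      using Cons.prems by (simp add: segU_apply)
    also have "\<dots> = grun N (concat (map sgates segs)) (grun N (sgates s) \<psi>)"
      using Cons by (simp add: rst_grun)
    finally show ?case by simp
  qed simp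
  then show ?thesis using assms by (simp add: apply_seq_op restr_rst)
qed

lemma unitary2_dmat: "unitary2 (dmat f)"
  unfolding unitary2_def
proof (intro allI)
  fix a b :: "bool \<times> bool"
  show "(\<Sum>c\<in>UNIV. cnj (dmat f c a) * dmat f c b) = (if a = b then 1 else 0)"
    by (cases a; cases b) (auto simp: dmat_def UNIV_bool2 cis_cnj cis_mult)
qed

definition altp :: "nat \<Rightarrow> seg list \<Rightarrow> bool" where
  "altp p xs \<longleftrightarrow> (\<forall>i<length xs. isSC (xs!i) = even (i + p))"

lemma acq_of_segs:
  assumes len: "length segs = k + 1" and alt: "altp 0 segs" and ok: "\<forall>s\<in>set segs. segok N s"
  shows "acq_circuit N k 1 (seq_op N (map (segU N) segs))"
  unfolding acq_circuit_def
proof (intro exI conjI allI impI)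
  show "length (map (segU N) segs) = k + 1" using len by simp
  show "seq_op N (map (segU N) segs) = seq_op N (map (segU N) segs)" ..
next
  fix i assume i: "i \<le> k" "even i"
  then have il: "i < length segs" using len by simp
  then have "isSC (segs ! i)" using alt i by (simp add: altp_def)
  then obtain gs where s: "segs ! i = SC gs" by (cases "segs ! i") auto
  have "segok N (SC gs)" using ok il s by (metis nth_mem)
  then show "clifford_circuit N (map (segU N) segs ! i)"
    unfolding clifford_circuit_def using il s
    by (intro exI[of _ "map toc gs"]) (auto elim!: isCl.elims simp: image_iff)
next
  fix i assume i: "i \<le> k" "odd i"
  then have il: "i < length segs" using len by simp
  then have "\<not> isSC (segs ! i)" using alt i by (simp add: altp_def)
  then obtain L where s: "segs ! i = SQ L" by (cases "segs ! i") auto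
  have sok: "segok N (SQ L)" using ok il s by (metis nth_mem)
  have "layer_ok N (Lc L)"
    unfolding layer_ok_def
  proof
    have "concat (map (\<lambda>(i, j, G). [i, j]) (Lc L)) = concat (map (\<lambda>(i,j,f). [i,j]) L)"
      by (auto simp: Lc_def comp_def case_prod_unfold)
    then show "distinct (concat (map (\<lambda>(i, j, G). [i, j]) (Lc L)))" using sok by simp
    show "\<forall>(i, j, G)\<in>set (Lc L). i < N \<and> j < N \<and> unitary2 G"
      using sok by (auto simp: Lc_def pok_def unitary2_dmat)
  qed
  then show "qnc0_circuit N 1 (map (segU N) segs ! i)"
    unfolding qnc0_circuit_def using il s by (intro exI[of _ "[Lc L]"]) auto
qed

lemma altp_append: "altp p xs \<Longrightarrow> altp (p + length xs) ys \<Longrightarrow> altp p (xs @ ys)"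
  unfolding altp_def
proof (intro allI impI)
  fix i assume a: "\<forall>i<length xs. isSC (xs ! i) = even (i + p)"
    "\<forall>i<length ys. isSC (ys ! i) = even (i + (p + length xs))" "i < length (xs @ ys)"
  show "isSC ((xs @ ys) ! i) = even (i + p)"
  proof (cases "i < length xs")
    case True then show ?thesis using a by (simp add: nth_append)
  next
    case False
    then show ?thesis using a(2)[rule_format, of "i - length xs"] a(3) by (simp add: nth_append)
  qed
qed

lemma altp_shift2: "altp (p + 2) xs = altp p xs"
  by (simp add: altp_def)

lemma altp_shift_even: "even q \<Longrightarrow> altp (p + q) xs = altp p xs"
  by (auto simp: altp_def elim!: evenE)

lemma altp_concat:
  assumes "\<forall>z\<in>set zs. altp p (f z) \<and> even (length (f z))"
  shows "altp p (concat (map f zs))"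
  using assms
proof (induction zs)
  case Nil then show ?case by (simp add: altp_def)
next
  case (Cons z zs)
  then show ?case by (simp add: altp_append altp_shift_even)
qed

fun seginv :: "seg \<Rightarrow> seg" where
  "seginv (SC gs) = SC (rev (map (\<lambda>g. case g of GP i j f \<Rightarrow> GP i j (\<lambda>a b. - f a b) | _ \<Rightarrow> g) gs))"
| "seginv (SQ L) = SQ (map (\<lambda>(i,j,f). (i,j,\<lambda>a b. - f a b)) L)"

lemma isSC_seginv[simp]: "isSC (seginv s) = isSC s" by (cases s) auto

lemma altp_rev:
  assumes "altp 0 xs" "even (length xs)"
  shows "altp 1 (rev (map seginv xs))"
  unfolding altp_def
proof (intro allI impI)
  fix i assume i: "i < length (rev (map seginv xs))"
  then have "rev (map seginv xs) ! i = seginv (xs ! (length xs - Suc i))" by (simp add: rev_nth)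
  moreover have "isSC (xs ! (length xs - Suc i)) = even (length xs - Suc i)"
    using assms(1) i by (simp add: altp_def)
  moreover have "even (length xs - Suc i) = even (i + 1)" using assms(2) i by auto
  ultimately show "isSC (rev (map seginv xs) ! i) = even (i + 1)" by simp
qed


definition ginv :: "gt \<Rightarrow> gt" where
  "ginv g = (case g of GP i j f \<Rightarrow> GP i j (\<lambda>a b. - f a b) | _ \<Rightarrow> g)"

lemma ginv_simps[simp]: "ginv (GH q) = GH q" "ginv (GX c t) = GX c t" "ginv (GP i j f) = GP i j (\<lambda>a b. - f a b)"
  by (simp_all add: ginv_def)

lemma seginv_SC: "seginv (SC gs) = SC (rev (map ginv gs))"
  by (simp add: ginv_def)

lemma ginv_step:
  assumes g: "gok N g" and r: "rst N \<psi>"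
  shows "gstep N (ginv g) (gstep N g \<psi>) = \<psi>"
proof (rule ext)
  fix y
  show "gstep N (ginv g) (gstep N g \<psi>) y = \<psi> y"
  proof (cases "length y = N")
    case False then show ?thesis using r by (simp add: gstep_len rst_def)
  next
    case y: True
    show ?thesis
    proof (cases g)
      case (GH q)
      have q: "q < N" using g GH by simp
      let ?s = "complex_of_real (sqrt 2)"
      have s: "?s \<noteq> 0" by simp
      have A: "gstep N (GH q) \<psi> (y[q:=False]) = (\<psi> (y[q:=False]) + \<psi> (y[q:=True])) / ?s"
        using q y by (simp add: gstep_H)
      have B: "gstep N (GH q) \<psi> (y[q:=True]) = (\<psi> (y[q:=False]) - \<psi> (y[q:=True])) / ?s"
        using q y by (simp add: gstep_H)
      have "gstep N (ginv g) (gstep N g \<psi>) y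
          = ((\<psi> (y[q:=False]) + \<psi> (y[q:=True])) / ?s + (if y!q then -1 else 1) * ((\<psi> (y[q:=False]) - \<psi> (y[q:=True])) / ?s)) / ?s"
        using q y GH A B by (simp add: gstep_H)
      also have "\<dots> = (if y!q then \<psi> (y[q:=True]) else \<psi> (y[q:=False]))"
        using s sqrt2_sq by (auto simp: field_simps)
      also have "\<dots> = \<psi> y"
        by (cases "y!q") (metis list_update_id)+
      finally show ?thesis .
    next
      case (GX c t)
      have ct: "c < N" "t < N" "c \<noteq> t" using g GX by auto
      have "gstep N (ginv g) (gstep N g \<psi>) y = \<psi> ((y[t := (y!t \<noteq> y!c)])[t := ((y!t \<noteq> y!c) \<noteq> y!c)])"
        using ct y GX by (simp add: gstep_X)
      also have "((y!t \<noteq> y!c) \<noteq> y!c) = y!t" by auto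
      finally show ?thesis by simp
    next
      case (GP i j f)
      have ij: "i < N" "j < N" "i \<noteq> j" using g GP by auto
      show ?thesis using ij y GP by (simp add: gstep_P cis_mult)
    qed
  qed
qed

lemma grun_inv:
  assumes "\<forall>g\<in>set gs. gok N g" "rst N \<psi>"
  shows "grun N (rev (map ginv gs)) (grun N gs \<psi>) = \<psi>"
  using assms
proof (induction gs arbitrary: \<psi>)
  case (Cons g gs)
  have "grun N (rev (map ginv (g # gs))) (grun N (g # gs) \<psi>)
      = gstep N (ginv g) (grun N (rev (map ginv gs)) (grun N gs (gstep N g \<psi>)))" by simp
  also have "\<dots> = gstep N (ginv g) (gstep N g \<psi>)" using Cons by (simp add: rst_gstep)
  also have "\<dots> = \<psi>" using Cons.prems by (simp add: ginv_step)
  finally show ?case .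
qed simp

lemma Phi_neg: "Phi (map (\<lambda>(i,j,f). (i,j,\<lambda>a b. - f a b)) L) y = - Phi L y"
  by (induction L) (auto simp: Phi_def)

lemma seg_inv:
  assumes "segok N s" "rst N \<psi>"
  shows "grun N (sgates (seginv s)) (grun N (sgates s) \<psi>) = \<psi>"
proof (cases s)
  case (SC gs)
  then show ?thesis using assms by (simp add: seginv_SC grun_inv del: seginv.simps)
next
  case (SQ L)
  let ?L' = "map (\<lambda>(i,j,f). (i,j,\<lambda>a b. - f a b)) L"
  have ok: "pok N L" using assms SQ by simp
  have ok': "pok N ?L'" using ok by (auto simp: pok_def)
  show ?thesis
  proof (rule ext)
    fix y
    show "grun N (sgates (seginv s)) (grun N (sgates s) \<psi>) y = \<psi> y"
    proof (cases "length y = N")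
      case True
      then show ?thesis using SQ grun_P[OF ok True] grun_P[OF ok' True]
        by (simp add: Phi_neg cis_mult)
    next
      case False
      have "rst N (grun N (sgates (seginv s)) (grun N (sgates s) \<psi>))" using assms by (simp add: rst_grun)
      then show ?thesis using False assms by (simp add: rst_def)
    qed
  qed
qed

lemma segs_inv:
  assumes "\<forall>s\<in>set segs. segok N s" "rst N \<psi>"
  shows "grun N (concat (map sgates (rev (map seginv segs)))) (grun N (concat (map sgates segs)) \<psi>) = \<psi>"
  using assms
proof (induction segs arbitrary: \<psi>)
  case (Cons s segs)
  have "grun N (concat (map sgates (rev (map seginv (s # segs))))) (grun N (concat (map sgates (s # segs))) \<psi>)
     = grun N (sgates (seginv s)) (grun N (concat (map sgates (rev (map seginv segs))))
          (grun N (concat (map sgates segs)) (grun N (sgates s) \<psi>)))" by simp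
  also have "\<dots> = grun N (sgates (seginv s)) (grun N (sgates s) \<psi>)"
    using Cons by (simp add: rst_grun)
  also have "\<dots> = \<psi>" using Cons.prems by (simp add: seg_inv)
  finally show ?case .
qed simp

lemma segok_inv: "segok N s \<Longrightarrow> segok N (seginv s)"
proof (cases s)
  case (SC gs)
  assume "segok N s"
  then show ?thesis using SC by (auto simp: seginv_SC elim!: isCl.elims simp del: seginv.simps)
next
  case (SQ L)
  assume "segok N s"
  moreover have "concat (map (\<lambda>(i,j,f). [i,j]) (map (\<lambda>(i,j,f). (i,j,\<lambda>a b. - f a b)) L)) = concat (map (\<lambda>(i,j,f). [i,j]) L)"
    by (induction L) auto
  ultimately show ?thesis using SQ by (auto simp: pok_def)
qed

definition flipm :: "nat \<Rightarrow> qstate \<Rightarrow> qstate" where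
  "flipm t \<psi> y = \<psi> (y[t := \<not> y!t])"

fun gq :: "gt \<Rightarrow> nat set" where
  "gq (GH q) = {q}"
| "gq (GX c t) = {c, t}"
| "gq (GP i j f) = {i, j}"

lemma gstep_flip:
  assumes t: "t \<notin> gq g" and g: "gok N g"
  shows "gstep N g (flipm t \<psi>) = flipm t (gstep N g \<psi>)"
proof (rule ext)
  fix y
  show "gstep N g (flipm t \<psi>) y = flipm t (gstep N g \<psi>) y"
  proof (cases "length y = N")
    case False then show ?thesis by (simp add: gstep_len flipm_def)
  next
    case y: True
    show ?thesis
    proof (cases g)
      case (GH q)
      then show ?thesis using t g y by (simp add: gstep_H flipm_def list_update_swap)
    next
      case (GX c t')
      then show ?thesis using t g y by (simp add: gstep_X flipm_def list_update_swap)
    next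
      case (GP i j f)
      then show ?thesis using t g y by (simp add: gstep_P flipm_def)
    qed
  qed
qed

lemma grun_flip:
  assumes "\<forall>g\<in>set gs. t \<notin> gq g \<and> gok N g"
  shows "grun N gs (flipm t \<psi>) = flipm t (grun N gs \<psi>)"
  using assms by (induction gs arbitrary: \<psi>) (simp_all add: gstep_flip)

lemma pst_X_flip:
  assumes c: "c < N" "t < N" "c \<noteq> t" and cl: "\<phi> c = dl a"
  shows "gstep N (GX c t) (pst N \<phi>) = (if a then flipm t (pst N \<phi>) else pst N \<phi>)"
proof (rule ext)
  fix y
  show "gstep N (GX c t) (pst N \<phi>) y = (if a then flipm t (pst N \<phi>) else pst N \<phi>) y"
  proof (cases "length y = N")
    case False then show ?thesis by (simp add: gstep_len flipm_def pst_def)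
  next
    case y: True
    show ?thesis
    proof (cases "y!c = a")
      case True
      then show ?thesis using c y by (cases a) (simp_all add: gstep_X flipm_def)
    next
      case False
      have z: "pst N \<phi> (y[t := v]) = 0" for v
        using pst_split0[of c N "y[t := v]" \<phi>] c y cl False by (simp add: dl_def)
      have "pst N \<phi> y = 0"
        using pst_split0[of c N y \<phi>] c y cl False by (simp add: dl_def)
      then show ?thesis using c y z by (simp add: gstep_X flipm_def)
    qed
  qed
qed

lemma ket_flip:
  assumes "length x = m"
  shows "ket (x @ [\<not> b] @ zs) = flipm m (ket (x @ [b] @ zs))"
proof (rule ext)
  fix y
  show "ket (x @ [\<not> b] @ zs) y = flipm m (ket (x @ [b] @ zs)) y"
  proof (cases "m < length y")
    case True
    have "(y[m := \<not> y!m] = x @ [b] @ zs) \<longleftrightarrow> (y = x @ [\<not> b] @ zs)"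
    proof
      assume h: "y[m := \<not> y!m] = x @ [b] @ zs"
      then have "(y[m := \<not> y!m])[m := \<not> b] = x @ [\<not> b] @ zs" using assms by (simp add: list_update_append)
      moreover have "(x @ [b] @ zs) ! m = b" using assms by (simp add: nth_append)
      then have "b = (\<not> y!m)" using arg_cong[OF h, of "\<lambda>l. l!m"] True by simp
      ultimately show "y = x @ [\<not> b] @ zs" by simp
    next
      assume h: "y = x @ [\<not> b] @ zs"
      then show "y[m := \<not> y!m] = x @ [b] @ zs" using assms by (simp add: list_update_append nth_append)
    qed
    then show ?thesis by (simp add: ket_def flipm_def)
  next
    case False
    then have "y \<noteq> x @ [\<not> b] @ zs" "y \<noteq> x @ [b] @ zs" using assms by auto
    moreover have "y[m := \<not> y!m] = y" using False by (simp add: list_update_beyond)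
    ultimately show ?thesis by (simp add: ket_def flipm_def)
  qed
qed


lemma dist_pairs2:
  assumes "distinct xs" "inj_on f (set xs)" "inj_on g (set xs)" "\<forall>a\<in>set xs. \<forall>b\<in>set xs. f a \<noteq> g b"
  shows "distinct (concat (map (\<lambda>x. [f x, g x]) xs))"
  using assms
proof (induction xs)
  case (Cons a xs)
  have "distinct (concat (map (\<lambda>x. [f x, g x]) xs))" using Cons by (auto simp: inj_on_insert)
  moreover have "f a \<notin> set (concat (map (\<lambda>x. [f x, g x]) xs))" "g a \<notin> set (concat (map (\<lambda>x. [f x, g x]) xs))"
    using Cons.prems by (auto simp: inj_on_def)
  moreover have "f a \<noteq> g a" using Cons.prems by auto
  ultimately show ?case by simp
qed simp

lemma sgates_ok: "segok N s \<Longrightarrow> g \<in> set (sgates s) \<Longrightarrow> gok N g"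
  by (cases s) (auto simp: pok_def gP_def)

lemma seginv_nt:
  assumes "segok N s" "\<forall>g\<in>set (sgates s). t \<notin> gq g"
  shows "\<forall>g\<in>set (sgates (seginv s)). t \<notin> gq g \<and> gok N g"
proof (cases s)
  case (SC gs)
  then show ?thesis using assms
    by (auto simp: seginv_SC simp del: seginv.simps elim!: isCl.elims) (metis gq.simps(1,2) ginv_simps(1,2) isCl.elims(2))+
next
  case (SQ L)
  then show ?thesis using assms by (auto simp: gP_def pok_def)
qed

context tcc begin

definition Cla where "Cla l = map GH (qs1 l) @ map gX (cs1 l)"
definition Clb where "Clb l = map gX (rev (cs1 l)) @ map GH (qsR l) @ map gX (cs2 l)"
definition Clc where "Clc l = map gX (rev (cs2 l)) @ map GH (qsO l)"
definition blk4 where "blk4 l = [SQ (L1 l), SC (Clb l), SQ (L2 l)]"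
definition pre where "pre = [SC (Cla 1)] @ concat (map (\<lambda>l. blk4 l @ [SC (Clc l @ Cla (Suc l))]) [1..<d]) @ blk4 d"
definition Xo where "Xo = GX (wq outw) m"
definition segsN where "segsN = pre @ [SC (Clc d @ [Xo])]"
definition segsF where "segsF = pre @ [SC (Clc d)]"
definition segsC where "segsC = pre @ [SC (Clc d @ [Xo] @ rev (map ginv (Clc d)))] @ rev (map seginv pre)"

lemma block_eq: "block l = Cla l @ concat (map sgates (blk4 l)) @ Clc l"
  by (simp add: block_def Cla_def Clb_def Clc_def blk4_def)

lemma flat_pre_gen:
  assumes "1 \<le> n"
  shows "Cla 1 @ concat (map (\<lambda>l. concat (map sgates (blk4 l)) @ Clc l @ Cla (Suc l)) [1..<n]) @ concat (map sgates (blk4 n)) @ Clc n @ T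
       = concat (map block [1..<Suc n]) @ T"
  using assms
proof (induction n arbitrary: T rule: dec_induct)
  case base
  then show ?case by (simp add: block_eq)
next
  case (step n)
  have "Cla 1 @ concat (map (\<lambda>l. concat (map sgates (blk4 l)) @ Clc l @ Cla (Suc l)) [1..<Suc n]) @ concat (map sgates (blk4 (Suc n))) @ Clc (Suc n) @ T
      = Cla 1 @ concat (map (\<lambda>l. concat (map sgates (blk4 l)) @ Clc l @ Cla (Suc l)) [1..<n]) @ concat (map sgates (blk4 n)) @ Clc n @ (Cla (Suc n) @ concat (map sgates (blk4 (Suc n))) @ Clc (Suc n) @ T)"
    using step.hyps by simp
  also have "\<dots> = concat (map block [1..<Suc n]) @ (Cla (Suc n) @ concat (map sgates (blk4 (Suc n))) @ Clc (Suc n) @ T)"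
    by (rule step.IH)
  also have "\<dots> = concat (map block [1..<Suc (Suc n)]) @ T"
    by (simp add: block_eq)
  finally show ?case .
qed

lemma flat_concat_blk: "concat (map sgates (concat (map (\<lambda>l. blk4 l @ [SC (Clc l @ Cla (Suc l))]) xs)))
   = concat (map (\<lambda>l. concat (map sgates (blk4 l)) @ Clc l @ Cla (Suc l)) xs)"
  by (induction xs) (simp_all add: blk4_def)

lemma flat_segsF: "1 \<le> d \<Longrightarrow> concat (map sgates segsF) = concat (map block [1..<Suc d])"
  using flat_pre_gen[of d "[]"] by (simp add: segsF_def pre_def flat_concat_blk)

lemma flat_segsN: "1 \<le> d \<Longrightarrow> concat (map sgates segsN) = concat (map block [1..<Suc d]) @ [Xo]"
  using flat_pre_gen[of d "[Xo]"] by (simp add: segsN_def pre_def flat_concat_blk)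

lemma flat_segsC: "concat (map sgates segsC) = concat (map sgates segsF) @ [Xo] @ concat (map sgates (rev (map seginv segsF)))"
  by (simp add: segsC_def segsF_def seginv_SC del: seginv.simps)

lemma blocks_run:
  assumes x: "length x = m" and inv: "Inv x b 1 \<phi>"
  shows "\<exists>\<phi>'. grun N (concat (map block [1..<Suc n])) (pst N \<phi>) = pst N \<phi>' \<and> Inv x b (Suc n) \<phi>'"
proof (induction n)
  case 0 then show ?case using inv by (intro exI[of _ \<phi>]) simp
next
  case (Suc n)
  then obtain \<phi>1 where h: "grun N (concat (map block [1..<Suc n])) (pst N \<phi>) = pst N \<phi>1" "Inv x b (Suc n) \<phi>1" by blast
  obtain \<phi>2 where h2: "grun N (block (Suc n)) (pst N \<phi>1) = pst N \<phi>2" "Inv x b (Suc (Suc n)) \<phi>2"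
    using block_step[OF x h(2)] by blast
  have "grun N (concat (map block [1..<Suc (Suc n)])) (pst N \<phi>) = pst N \<phi>2" using h h2 by simp
  then show ?case using h2 by blast
qed

definition phi0 where "phi0 x b q = (if q < m then dl (x!q) else if q = m then dl b else dl False)"

lemma ket_init:
  assumes x: "length x = m"
  shows "ket (x @ [b] @ replicate aa False) = pst N (phi0 x b)"
proof -
  have "ket (x @ [b] @ replicate aa False) = pst N (\<lambda>i. dl ((x @ [b] @ replicate aa False) ! i))"
    by (rule ket_pst) (simp add: x N_def)
  also have "\<dots> = pst N (phi0 x b)"
    by (rule pst_cong) (auto simp: phi0_def x nth_append N_def)
  finally show ?thesis .
qed

lemma Inv_init: "length x = m \<Longrightarrow> Inv x b 1 (phi0 x b)"
  unfolding Inv_def by (auto simp: phi0_def dest: wf_lay)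

lemma final_val:
  assumes x: "length x = m" and inv: "Inv x b (Suc d) \<phi>"
  shows "\<phi> (wq outw) = dl (V x ! outw)" "\<phi> m = dl b"
proof -
  show "\<phi> m = dl b" using inv by (simp add: Inv_def)
  show "\<phi> (wq outw) = dl (V x ! outw)"
  proof (cases "outw < m")
    case True then show ?thesis using inv x by (simp add: wq_def Inv_def V_input)
  next
    case False
    have k1: "outw - m < G" using wf_out False by simp
    then have k: "outw - m < G" "lay (outw - m) < Suc d" using wf_lay[OF k1] by auto
    then show ?thesis using inv False by (simp add: wq_def Inv_def)
  qed
qed

end


lemma altp_Cons: "altp p (s # xs) \<longleftrightarrow> (isSC s = even p) \<and> altp (Suc p) xs"
  unfolding altp_def by (auto simp add: All_less_Suc2)

lemma altp_Nil[simp]: "altp p []" by (simp add: altp_def)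

context tcc begin

lemma Cla_ok: "g \<in> set (Cla l) \<Longrightarrow> isCl g \<and> gok N g \<and> m \<notin> gq g"
proof -
  assume g: "g \<in> set (Cla l)"
  show ?thesis
  proof (cases "g \<in> set (map GH (qs1 l))")
    case True
    then obtain q where q: "g = GH q" "q \<in> set (qs1 l)" by auto
    then show ?thesis by (auto simp: set_qs1 intro!: oq_lt rq_lt)
  next
    case False
    then obtain a t where p: "g = GX a t" "(a,t) \<in> set (cs1 l)" using g by (auto simp: Cla_def gX_def)
    have "a \<noteq> m" "t \<noteq> m" using p(2) unfolding mem_cs1 by auto
    then show ?thesis using p cs1_ok[OF p(2)] by auto
  qed
qed

lemma cs1_nm: "(a,t) \<in> set (cs1 l) \<Longrightarrow> a \<noteq> m \<and> t \<noteq> m"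
  unfolding mem_cs1 by auto

lemma cs2_nm: "(a,t) \<in> set (cs2 l) \<Longrightarrow> a \<noteq> m \<and> t \<noteq> m"
  unfolding mem_cs2 by (auto simp: ctl_def split: if_splits)

lemma gX_ok1: "p \<in> set (cs1 l) \<Longrightarrow> isCl (gX p) \<and> gok N (gX p) \<and> m \<notin> gq (gX p)"
  using cs1_ok[of "fst p" "snd p" l] cs1_nm[of "fst p" "snd p" l] by (simp add: gX_def)

lemma gX_ok2: "p \<in> set (cs2 l) \<Longrightarrow> isCl (gX p) \<and> gok N (gX p) \<and> m \<notin> gq (gX p)"
  using cs2_ok[of "fst p" "snd p" l] cs2_nm[of "fst p" "snd p" l] by (simp add: gX_def)

lemma Clb_ok: "g \<in> set (Clb l) \<Longrightarrow> isCl g \<and> gok N g \<and> m \<notin> gq g"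
  unfolding Clb_def using gX_ok1 gX_ok2 by (auto simp: set_qsR intro!: rq_lt)

lemma Clc_ok: "g \<in> set (Clc l) \<Longrightarrow> isCl g \<and> gok N g \<and> m \<notin> gq g"
  unfolding Clc_def using gX_ok2 by (auto simp: set_qsO intro!: oq_lt)

lemma L1_dist: "distinct (concat (map (\<lambda>(i,j,f). [i,j]) (L1 l)))"
proof -
  have e: "concat (map (\<lambda>(i,j,f). [i,j]) (L1 l)) =
     concat (map (\<lambda>x. [(\<lambda>((k,u,j),c). rcq k u j c) x, (\<lambda>((k,u,j),c). wcq k u j c) x]) (kujcs l))"
    unfolding L1_def by (simp add: comp_def case_prod_unfold)
  show ?thesis unfolding e
    by (rule dist_pairs2[OF dist_kujcs]) (auto simp: inj_on_def case_prod_unfold)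
qed

lemma L2_dist: "distinct (concat (map (\<lambda>(i,j,f). [i,j]) (L2 l)))"
proof -
  have e: "concat (map (\<lambda>(i,j,f). [i,j]) (L2 l)) =
     concat (map (\<lambda>x. [(\<lambda>((k,u),M). paq k u M) x, (\<lambda>((k,u),M). pdq k u M) x]) (kuMs l))"
    unfolding L2_def by (simp add: comp_def case_prod_unfold)
  have inj: "M = M'" if "length M = Suc K" "length M' = Suc K" "benc M = benc M'" for M M'
    using benc_inj that by simp
  show ?thesis unfolding e
    by (rule dist_pairs2[OF dist_kuMs]) (auto simp: inj_on_def case_prod_unfold intro: inj)
qed

lemma L1_nm: "g \<in> set (map gP (L1 l)) \<Longrightarrow> m \<notin> gq g"
  by (auto simp: L1_def gP_def)
lemma L2_nm: "g \<in> set (map gP (L2 l)) \<Longrightarrow> m \<notin> gq g"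
  by (auto simp: L2_def gP_def)

definition sgok where "sgok s \<longleftrightarrow> segok N s \<and> (\<forall>g\<in>set (sgates s). m \<notin> gq g)"

lemma sgok_each:
  "sgok (SC (Cla l))" "sgok (SC (Clb l))" "sgok (SQ (L1 l))" "sgok (SQ (L2 l))"
  "sgok (SC (Clc l @ Cla l'))" "sgok (SC (Clc l))"
  using Cla_ok Clb_ok Clc_ok L1_ok L2_ok L1_dist L2_dist L1_nm L2_nm
  unfolding sgok_def by (auto simp del: set_map) blast+

lemma pre_ok: "s \<in> set pre \<Longrightarrow> segok N s \<and> (\<forall>g\<in>set (sgates s). m \<notin> gq g)"
proof -
  assume s: "s \<in> set pre"
  have "sgok s" using s unfolding pre_def blk4_def by (auto simp: sgok_each)
  then show ?thesis by (simp add: sgok_def)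
qed

lemma Xo_ok: "isCl Xo \<and> gok N Xo"
  using wq_lt[OF wf_out] m_lt by (simp add: Xo_def)

lemma segsN_ok: "s \<in> set segsN \<Longrightarrow> segok N s"
  unfolding segsN_def using pre_ok Clc_ok Xo_ok by auto

lemma segsF_ok: "s \<in> set segsF \<Longrightarrow> segok N s \<and> (\<forall>g\<in>set (sgates s). m \<notin> gq g)"
  unfolding segsF_def using pre_ok Clc_ok by auto

lemma segsC_ok: "s \<in> set segsC \<Longrightarrow> segok N s"
proof -
  assume s: "s \<in> set segsC"
  have mid: "segok N (SC (Clc d @ [Xo] @ rev (map ginv (Clc d))))"
    using Clc_ok Xo_ok by (auto elim!: isCl.elims) (metis isCl.elims(2) ginv_simps(1,2) gok.simps(1,2) Clc_ok)+
  show ?thesis using s mid pre_ok segok_inv unfolding segsC_def by auto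
qed

lemma len_pre: "1 \<le> d \<Longrightarrow> length pre = 4 * d"
proof -
  assume d: "1 \<le> d"
  have "length (concat (map (\<lambda>l. blk4 l @ [SC (Clc l @ Cla (Suc l))]) [1..<d])) = 4 * (d - 1)"
    by (simp add: length_concat blk4_def comp_def sum_list_triv)
  then show ?thesis using d by (simp add: pre_def blk4_def)
qed

lemma alt_pre: "1 \<le> d \<Longrightarrow> altp 0 pre"
proof -
  assume d: "1 \<le> d"
  have a1: "altp 0 [SC (Cla 1)]" by (simp add: altp_def)
  have a4: "altp 1 [SQ a1, SC a2, SQ a3, SC a4]" for a1 a2 a3 a4
    by (simp add: altp_Cons)
  have a2: "altp 1 (concat (map (\<lambda>l. blk4 l @ [SC (Clc l @ Cla (Suc l))]) [1..<d]))"
    by (rule altp_concat) (simp add: blk4_def altp_Cons)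
  have l2: "length (concat (map (\<lambda>l. blk4 l @ [SC (Clc l @ Cla (Suc l))]) [1..<d])) = 4 * (d - 1)"
    by (simp add: length_concat blk4_def comp_def sum_list_triv)
  have a3': "altp 1 (blk4 d)" by (simp add: blk4_def altp_Cons)
  have a3: "altp (1 + 4 * (d - 1)) (blk4 d)"
    using altp_shift_even[of "4 * (d - 1)" 1 "blk4 d"] a3' by simp
  show ?thesis unfolding pre_def
    by (rule altp_append[OF a1]) (rule altp_append, use a2 in simp, use a3 l2 in \<open>simp add: add.commute\<close>)
qed

end


context tcc begin

lemma nc_form:
  assumes "\<phi> m = dl v"
  shows "\<exists>\<psi>. pst N \<phi> = (\<lambda>y. if length y = N \<and> y ! m = v then \<psi> (take m y @ drop (m + 1) y) else 0)"
proof (intro exI ext)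
  fix y
  show "pst N \<phi> y = (if length y = N \<and> y ! m = v then (\<lambda>w. pst N \<phi> (take m w @ [v] @ drop m w)) (take m y @ drop (m + 1) y) else 0)"
  proof (cases "length y = N")
    case False then show ?thesis by (simp add: pst_def)
  next
    case True
    have mN: "m < N" by (rule m_lt)
    show ?thesis
    proof (cases "y ! m = v")
      case yv: True
      have "take m (take m y @ drop (m + 1) y) @ [v] @ drop m (take m y @ drop (m + 1) y) = take m y @ [y!m] @ drop (Suc m) y"
        using True mN yv by (simp add: min_def)
      also have "\<dots> = y" using True mN by (simp add: id_take_nth_drop[symmetric])
      finally show ?thesis using True yv by simp
    next
      case False
      have "pst N \<phi> y = 0" using pst_split0[OF m_lt True, of \<phi>] assms False by (simp add: dl_def)
      then show ?thesis using False by simp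
    qed
  qed
qed

lemma rst_ket: "length z = N \<Longrightarrow> rst N (ket z)"
  by (simp add: ket_pst)

lemma nc_result:
  assumes d: "1 \<le> d" and f: "\<forall>x. length x = m \<longrightarrow> tc_eval x (gs, outw) = f x"
  shows "acq_circuit N (4 * d) 1 (seq_op N (map (segU N) segsN)) \<and>
         noncleanly_computes m aa (seq_op N (map (segU N) segsN)) f"
proof
  have len: "length segsN = 4 * d + 1" using len_pre[OF d] by (simp add: segsN_def)
  have alt: "altp 0 segsN" unfolding segsN_def
    by (rule altp_append[OF alt_pre[OF d]]) (simp add: altp_Cons len_pre[OF d])
  show "acq_circuit N (4 * d) 1 (seq_op N (map (segU N) segsN))"
    by (rule acq_of_segs[OF len alt]) (use segsN_ok in blast)
  show "noncleanly_computes m aa (seq_op N (map (segU N) segsN)) f"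
    unfolding noncleanly_computes_def
  proof (intro allI impI)
    fix x :: "bool list" assume x: "length x = m"
    let ?z = "x @ [False] @ replicate aa False"
    have z: "length ?z = N" using x by (simp add: N_def)
    obtain \<phi>F where F: "grun N (concat (map block [1..<Suc d])) (pst N (phi0 x False)) = pst N \<phi>F"
      "Inv x False (Suc d) \<phi>F"
      using blocks_run[OF x Inv_init[OF x]] by blast
    have fv: "\<phi>F (wq outw) = dl (f x)" "\<phi>F m = dl False"
      using final_val[OF x F(2)] f x by (simp_all add: tc_eval_V)
    have "apply_op N (seq_op N (map (segU N) segsN)) (ket ?z) = grun N (concat (map sgates segsN)) (ket ?z)"
      by (rule segs_apply) (use segsN_ok rst_ket[OF z] in auto)
    also have "\<dots> = gstep N Xo (pst N \<phi>F)"
      using flat_segsN[OF d] ket_init[OF x] F(1) by simp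
    also have "\<dots> = pst N (\<phi>F(m := (\<lambda>b. \<phi>F m (b \<noteq> f x))))"
      unfolding Xo_def by (rule pst_X_cl[where \<phi>=\<phi>F and c="wq outw" and t=m and a="f x", OF wq_lt[OF wf_out] m_lt wq_neq(1)[of outw] fv(1)])
    also have "(\<lambda>b. \<phi>F m (b \<noteq> f x)) = dl (f x)" using fv(2) by (auto simp: dl_def fun_eq_iff)
    finally have res: "apply_op N (seq_op N (map (segU N) segsN)) (ket ?z) = pst N (\<phi>F(m := dl (f x)))" .
    obtain \<psi> where "pst N (\<phi>F(m := dl (f x))) = (\<lambda>y. if length y = N \<and> y ! m = f x then \<psi> (take m y @ drop (m + 1) y) else 0)"
      using nc_form[of "\<phi>F(m := dl (f x))" "f x"] by auto
    then show "\<exists>\<psi>. apply_op (m + 1 + aa) (seq_op N (map (segU N) segsN)) (ket ?z) =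
             (\<lambda>y. if length y = m + 1 + aa \<and> y ! m = f x then \<psi> (take m y @ drop (m + 1) y) else 0)"
      using res by (auto simp: N_def)
  qed
qed

lemma cl_result:
  assumes d: "1 \<le> d" and f: "\<forall>x. length x = m \<longrightarrow> tc_eval x (gs, outw) = f x"
  shows "acq_circuit N (8 * d) 1 (seq_op N (map (segU N) segsC)) \<and>
         cleanly_computes m aa (seq_op N (map (segU N) segsC)) f"
proof
  have len: "length segsC = 8 * d + 1" using len_pre[OF d] by (simp add: segsC_def)
  have ar: "altp 1 (rev (map seginv pre))" using altp_rev[OF alt_pre[OF d]] len_pre[OF d] by simp
  have alt: "altp 0 segsC" unfolding segsC_def
    by (rule altp_append[OF alt_pre[OF d]])
       (simp add: altp_Cons len_pre[OF d], use altp_shift_even[of "4 * d" 1] ar in \<open>simp add: add.commute\<close>)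
  show "acq_circuit N (8 * d) 1 (seq_op N (map (segU N) segsC))"
    by (rule acq_of_segs[OF len alt]) (use segsC_ok in blast)
  show "cleanly_computes m aa (seq_op N (map (segU N) segsC)) f"
    unfolding cleanly_computes_def
  proof (intro allI impI)
    fix x :: "bool list" and b assume x: "length x = m"
    let ?z = "x @ [b] @ replicate aa False"
    have z: "length ?z = N" using x by (simp add: N_def)
    let ?R = "concat (map sgates (rev (map seginv segsF)))"
    let ?F = "concat (map sgates segsF)"
    obtain \<phi>F where F: "grun N (concat (map block [1..<Suc d])) (pst N (phi0 x b)) = pst N \<phi>F"
      "Inv x b (Suc d) \<phi>F"
      using blocks_run[OF x Inv_init[OF x]] by blast
    have fv: "\<phi>F (wq outw) = dl (f x)"
      using final_val[OF x F(2)] f x by (simp_all add: tc_eval_V)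
    have F': "grun N ?F (ket ?z) = pst N \<phi>F" using flat_segsF[OF d] ket_init[OF x] F(1) by simp
    have Rok: "\<forall>g\<in>set ?R. m \<notin> gq g \<and> gok N g"
    proof
      fix g assume "g \<in> set ?R"
      then obtain s where s: "s \<in> set segsF" "g \<in> set (sgates (seginv s))" by auto
      show "m \<notin> gq g \<and> gok N g" using seginv_nt[of N s m] segsF_ok[OF s(1)] s(2) by blast
    qed
    have inv: "grun N ?R (grun N ?F (ket ?z)) = ket ?z"
      by (rule segs_inv) (use segsF_ok rst_ket[OF z] in auto)
    have "apply_op N (seq_op N (map (segU N) segsC)) (ket ?z) = grun N (concat (map sgates segsC)) (ket ?z)"
      by (rule segs_apply) (use segsC_ok rst_ket[OF z] in auto)
    also have "\<dots> = grun N ?R (gstep N Xo (pst N \<phi>F))"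
      using F' by (simp add: flat_segsC)
    also have "gstep N Xo (pst N \<phi>F) = (if f x then flipm m (pst N \<phi>F) else pst N \<phi>F)"
      unfolding Xo_def by (rule pst_X_flip[where \<phi>=\<phi>F and c="wq outw" and t=m and a="f x", OF wq_lt[OF wf_out] m_lt wq_neq(1)[of outw] fv])
    also have "grun N ?R (if f x then flipm m (pst N \<phi>F) else pst N \<phi>F)
       = (if f x then flipm m (ket ?z) else ket ?z)"
      using grun_flip[OF Rok] inv F' by simp
    also have "\<dots> = ket (x @ [f x \<noteq> b] @ replicate aa False)"
      using ket_flip[OF x, of b "replicate aa False"] by auto
    finally show "apply_op (m + 1 + aa) (seq_op N (map (segU N) segsC)) (ket ?z) = ket (x @ [f x \<noteq> b] @ replicate aa False)"
      by (simp add: N_def)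
  qed
qed

end


definition pb :: "(nat \<Rightarrow> nat) \<Rightarrow> bool" where
  "pb f \<longleftrightarrow> (\<exists>A e. \<forall>m. f m \<le> A * (m + 1) ^ e)"

lemma pb_const: "pb (\<lambda>m. c)"
  unfolding pb_def by (rule exI[of _ c], rule exI[of _ 0]) simp

lemma pb_pow: "pb (\<lambda>m. m ^ k)"
  unfolding pb_def by (rule exI[of _ 1], rule exI[of _ k]) (simp add: power_mono)

lemma pow_le_mono: "e1 \<le> e \<Longrightarrow> (m + 1::nat) ^ e1 \<le> (m + 1) ^ e"
  by (rule power_increasing) auto

lemma pb_add: "pb f \<Longrightarrow> pb g \<Longrightarrow> pb (\<lambda>m. f m + g m)"
proof -
  assume "pb f" "pb g"
  then obtain A1 e1 A2 e2 where h: "\<forall>m. f m \<le> A1 * (m + 1) ^ e1" "\<forall>m. g m \<le> A2 * (m + 1) ^ e2"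
    unfolding pb_def by blast
  have "f m + g m \<le> (A1 + A2) * (m + 1) ^ (e1 + e2)" for m
  proof -
    have "f m \<le> A1 * (m + 1) ^ (e1 + e2)" using h(1) pow_le_mono[of e1 "e1 + e2" m]
      by (meson le_add1 le_trans mult_le_mono2)
    moreover have "g m \<le> A2 * (m + 1) ^ (e1 + e2)" using h(2) pow_le_mono[of e2 "e1 + e2" m]
      by (meson le_add2 le_trans mult_le_mono2)
    ultimately show ?thesis by (simp add: algebra_simps)
  qed
  then show ?thesis unfolding pb_def by blast
qed

lemma pb_mult: "pb f \<Longrightarrow> pb g \<Longrightarrow> pb (\<lambda>m. f m * g m)"
proof -
  assume "pb f" "pb g"
  then obtain A1 e1 A2 e2 where h: "\<forall>m. f m \<le> A1 * (m + 1) ^ e1" "\<forall>m. g m \<le> A2 * (m + 1) ^ e2"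
    unfolding pb_def by blast
  have "f m * g m \<le> (A1 * A2) * (m + 1) ^ (e1 + e2)" for m
  proof -
    have "f m * g m \<le> (A1 * (m + 1) ^ e1) * (A2 * (m + 1) ^ e2)" using h by (intro mult_le_mono) auto
    then show ?thesis by (simp add: power_add algebra_simps)
  qed
  then show ?thesis unfolding pb_def by blast
qed

lemma pb_mono: "(\<And>m. f m \<le> g m) \<Longrightarrow> pb g \<Longrightarrow> pb f"
  unfolding pb_def by (meson le_trans)

lemma pb_hb: "pb f \<Longrightarrow> pb (\<lambda>m. hb (f m))"
proof -
  assume f: "pb f"
  have f1: "pb (\<lambda>m. 2 * f m + 1)"
    by (rule pb_add[OF pb_mult[OF pb_const[of 2] f] pb_const[of 1]])
  have "pb (\<lambda>m. (2 * f m + 1) * (2 * f m + 1))" by (rule pb_mult[OF f1 f1])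
  then show ?thesis by (simp add: hb_def power2_eq_square)
qed

lemma pb_final:
  assumes "pb f"
  shows "\<exists>c. \<forall>m. f m \<le> c * m ^ c + c"
proof -
  obtain A e where h: "\<forall>m. f m \<le> A * (m + 1) ^ e" using assms unfolding pb_def by blast
  define c where "c = A * 2 ^ e + e"
  have "f m \<le> c * m ^ c + c" for m
  proof (cases "m = 0")
    case True
    have "(1::nat) \<le> 2 ^ e" by simp
    then have "A * 1 \<le> A * 2 ^ e" by (rule mult_le_mono2)
    then have "A \<le> c" unfolding c_def by linarith
    then have "f m \<le> c" using True h[rule_format, of 0] by simp
    then show ?thesis by (simp add: trans_le_add2)
  next
    case False
    have "(m + 1) ^ e \<le> (2 * m) ^ e" using False by (intro power_mono) auto
    also have "\<dots> = 2 ^ e * m ^ e" by (simp add: power_mult_distrib)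
    also have "m ^ e \<le> m ^ c" using False by (intro power_increasing) (auto simp: c_def)
    finally have "(m + 1) ^ e \<le> 2 ^ e * m ^ c" by simp
    then have "f m \<le> A * (2 ^ e * m ^ c)" using h[rule_format, of m] by (meson le_trans mult_le_mono2)
    also have "\<dots> \<le> c * m ^ c" by (simp add: c_def algebra_simps)
    finally show ?thesis by simp
  qed
  then show ?thesis by blast
qed

theorem lemma6p3:
  fixes f :: "bool list \<Rightarrow> bool" and d :: nat
  assumes "tc0_depth d f"
  shows "noncleanly_in_ACQ (4 * d) f \<and> cleanly_in_ACQ (8 * d) f"
proof -
  obtain c0 where H: "\<forall>m. \<exists>C. tc_wf m d C \<and> length (fst C) \<le> c0 * m ^ c0 + c0 \<and>
        (\<forall>x. length x = m \<longrightarrow> tc_eval x C = f x)"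
    using assms unfolding tc0_depth_def by blast
  then obtain Cf where Cf: "\<And>m. tc_wf m d (Cf m) \<and> length (fst (Cf m)) \<le> c0 * m ^ c0 + c0 \<and>
        (\<forall>x. length x = m \<longrightarrow> tc_eval x (Cf m) = f x)"
    by metis
  have loc: "tcc m (fst (Cf m)) (snd (Cf m)) d" for m
    using Cf[of m] by (simp add: tcc_def)
  have d: "1 \<le> d"
  proof -
    interpret t0: tcc 0 "fst (Cf 0)" "snd (Cf 0)" d by (rule loc)
    have "0 < t0.G" using t0.wf_out by simp
    then show ?thesis using t0.wf_lay[of 0] by simp
  qed
  define af where "af m = tcc.aa m (fst (Cf m))" for m
  have paf: "pb af"
  proof -
    have G: "pb (\<lambda>m. length (fst (Cf m)))"
      by (rule pb_mono[of _ "\<lambda>m. c0 * m ^ c0 + c0"]) (use Cf in blast, intro pb_add pb_mult pb_const pb_pow)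
    have "pb (\<lambda>m. m + length (fst (Cf m)))"
      by (rule pb_add[OF _ G]) (rule pb_mono[OF _ pb_pow[of 1]], simp)
    then have "pb (\<lambda>m. 4 * (m + length (fst (Cf m))))" by (rule pb_mult[OF pb_const[of 4]])
    then have B5: "pb (\<lambda>m. 4 * (m + length (fst (Cf m))) + 5)" by (rule pb_add[OF _ pb_const[of 5]])
    have "pb (\<lambda>m. hb (hb (hb (hb (4 * (m + length (fst (Cf m))) + 5)))) + 1)"
      by (rule pb_add[OF pb_hb[OF pb_hb[OF pb_hb[OF pb_hb[OF B5]]]] pb_const])
    moreover have "af m = hb (hb (hb (hb (4 * (m + length (fst (Cf m))) + 5)))) + 1" for m
      using tcc.aa_def[OF loc, of m] tcc.BB_def[OF loc, of m] tcc.W_def[OF loc, of m] tcc.G_def[OF loc, of m]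
      by (simp add: af_def)
    then have "af = (\<lambda>m. hb (hb (hb (hb (4 * (m + length (fst (Cf m))) + 5)))) + 1)" by (intro ext)
    ultimately show ?thesis by (simp only:)
  qed
  obtain c where c: "\<forall>m. af m \<le> c * m ^ c + c" using pb_final[OF paf] by blast
  have fm: "\<forall>x. length x = m \<longrightarrow> tc_eval x (fst (Cf m), snd (Cf m)) = f x" for m
    using Cf[of m] by simp
  have "noncleanly_in_ACQ (4 * d) f"
    unfolding noncleanly_in_ACQ_def
  proof (rule exI[of _ 1], rule exI[of _ c], rule allI)
    fix m
    interpret t: tcc m "fst (Cf m)" "snd (Cf m)" d by (rule loc)
    have "acq_circuit t.N (4 * d) 1 (seq_op t.N (map (segU t.N) t.segsN)) \<and>
          noncleanly_computes m t.aa (seq_op t.N (map (segU t.N) t.segsN)) f"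
      by (rule t.nc_result[OF d fm])
    moreover have "t.aa \<le> c * m ^ c + c" using c af_def by simp
    ultimately show "\<exists>a U. a \<le> c * m ^ c + c \<and> acq_circuit (m + 1 + a) (4 * d) 1 U \<and> noncleanly_computes m a U f"
      by (intro exI[of _ t.aa] exI[of _ "seq_op t.N (map (segU t.N) t.segsN)"]) (simp add: t.N_def)
  qed
  moreover have "cleanly_in_ACQ (8 * d) f"
    unfolding cleanly_in_ACQ_def
  proof (rule exI[of _ 1], rule exI[of _ c], rule allI)
    fix m
    interpret t: tcc m "fst (Cf m)" "snd (Cf m)" d by (rule loc)
    have "acq_circuit t.N (8 * d) 1 (seq_op t.N (map (segU t.N) t.segsC)) \<and>
          cleanly_computes m t.aa (seq_op t.N (map (segU t.N) t.segsC)) f"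
      by (rule t.cl_result[OF d fm])
    moreover have "t.aa \<le> c * m ^ c + c" using c af_def by simp
    ultimately show "\<exists>a U. a \<le> c * m ^ c + c \<and> acq_circuit (m + 1 + a) (8 * d) 1 U \<and> cleanly_computes m a U f"
      by (intro exI[of _ t.aa] exI[of _ "seq_op t.N (map (segU t.N) t.segsC)"]) (simp add: t.N_def)
  qed
  ultimately show ?thesis ..
qed


end
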